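(* Let $(W,S)$ be a Coxeter group with Coxeter matrix $(m_{s,s'})_{(s,s')\in S\times S}$, and let $w\in W$. Let $C$ be a directed cycle in the edge-colored directed graph $\mathcal{R}(w)$. Let $c=[(s,t)]\in\mathfrak{M}/\sim$ be an equivalence class, and let $c^{\mathrm{op}}=[(t,s)]\in\mathfrak{M}/\sim$. Then: (a) The number of arcs colored $c$ appearing in $C$ equals the number of arcs colored $c^{\mathrm{op}}$ appearing in $C$. (b) The number of arcs whose color belongs to $\{c,c^{\mathrm{op}}\}$ appearing in $C$ is even.
   Context: A Coxeter group is a pair $(W,S)$ where $W$ is a group and $S$ a finite subset of $W$ such that there is a matrix $(m_{s,s'})\in\{1,2,3,\ldots,\infty\}^{S\times S}$ with $m_{s,s}=1$, $m_{s,t}=m_{t,s}\geq 2$ for distinct $s,t$, and $W$ is presented by generators $S$ and relations $(st)^{m_{s,t}}=1$ for all $(s,t)$ with $m_{s,t}\neq\infty$ (this is the Coxeter matrix; $m_{s,t}$ is the order of $st$). Let $\mathfrak{M}=\{(s,t)\in S\times S : s\neq t,\ m_{s,t}<\infty\}$. Define the equivalence relation $\sim$ on $\mathfrak{M}$ by $(s,t)\sim(s',t')$ iff there is $q\in W$ with $qsq^{-1}=s'$ and $qtq^{-1}=t'$; $[P]$ denotes the class of $P\in\mathfrak{M}$. A reduced expression for $w\in W$ is a tuple $(a_1,\ldots,a_k)$ of elements of $S$ with $w=a_1\cdots a_k$ and $k$ minimal. A factor of a word $(a_1,\ldots,a_k)$ is a contiguous subword $(a_{i+1},\ldots,a_{i+m})$.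 For $(s,t)\in\mathfrak{M}$ and reduced expressions $\vec a,\vec b$ of $w$, $\vec b$ is obtained from $\vec a$ by an $(s,t)$-braid move if $\vec b$ arises from $\vec a$ by replacing a factor of the form $(s,t,s,t,\ldots)$ ($m_{s,t}$ entries) by $(t,s,t,s,\ldots)$ ($m_{s,t}$ entries). The graph $\mathcal{R}(w)$ has as vertices the reduced expressions of $w$, and for every $(s,t)\in\mathfrak{M}$ and reduced expressions $\vec a,\vec b$ of $w$ such that $\vec b$ is obtained from $\vec a$ by an $(s,t)$-braid move, an arc from $\vec a$ to $\vec b$ colored $[(s,t)]$. *)

theory Defs
  imports "HOL-Algebra.Group" "HOL-Library.Extended_Nat"
begin

definition word_eval :: "('a, 'b) monoid_scheme \<Rightarrow> 'a list \<Rightarrow> 'a" where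
  "word_eval G xs = foldr (\<lambda>x y. x \<otimes>\<^bsub>G\<^esub> y) xs \<one>\<^bsub>G\<^esub>"

definition alt_word :: "'a \<Rightarrow> 'a \<Rightarrow> nat \<Rightarrow> 'a list" where
  "alt_word s t k = map (\<lambda>i. if even i then s else t) [0..<k]"

text \<open>The congruence on words over S generated by the Coxeter relations
  (s t)^(m s t) = 1 for m s t finite (for s = t this is s s = 1).\<close>
inductive_set cox_cong :: "'a set \<Rightarrow> ('a \<Rightarrow> 'a \<Rightarrow> enat) \<Rightarrow> ('a list \<times> 'a list) set"
  for S m where
  rel: "\<lbrakk>s \<in> S; t \<in> S; m s t = enat k\<rbrakk> \<Longrightarrow> (alt_word s t (2 * k), []) \<in> cox_cong S m"
| refl: "xs \<in> lists S \<Longrightarrow> (xs, xs) \<in> cox_cong S m"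
| sym: "(xs, ys) \<in> cox_cong S m \<Longrightarrow> (ys, xs) \<in> cox_cong S m"
| trans: "\<lbrakk>(xs, ys) \<in> cox_cong S m; (ys, zs) \<in> cox_cong S m\<rbrakk> \<Longrightarrow> (xs, zs) \<in> cox_cong S m"
| ctxt: "\<lbrakk>(xs, ys) \<in> cox_cong S m; u \<in> lists S; v \<in> lists S\<rbrakk>
          \<Longrightarrow> (u @ xs @ v, u @ ys @ v) \<in> cox_cong S m"

text \<open>Since every generator is an involution
  (relation for s = t), the group presentation amounts to: every element is a word
  over S, and two words over S are equal in G iff they are related by the
  congruence generated by the relations.\<close>
definition coxeter_system :: "('a, 'b) monoid_scheme \<Rightarrow> 'a set \<Rightarrow> ('a \<Rightarrow> 'a \<Rightarrow> enat) \<Rightarrow> bool" where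
  "coxeter_system G S m \<longleftrightarrow>
     group G \<and> finite S \<and> S \<subseteq> carrier G \<and>
     (\<forall>s\<in>S. m s s = 1) \<and>
     (\<forall>s\<in>S. \<forall>t\<in>S. s \<noteq> t \<longrightarrow> m s t = m t s \<and> m s t \<ge> 2) \<and>
     carrier G = word_eval G ` lists S \<and>
     (\<forall>xs\<in>lists S. \<forall>ys\<in>lists S. word_eval G xs = word_eval G ys \<longleftrightarrow> (xs, ys) \<in> cox_cong S m)"

definition braid_pairs :: "'a set \<Rightarrow> ('a \<Rightarrow> 'a \<Rightarrow> enat) \<Rightarrow> ('a \<times> 'a) set" where
  "braid_pairs S m = {(s, t). s \<in> S \<and> t \<in> S \<and> s \<noteq> t \<and> m s t \<noteq> \<infinity>}"

definition pair_conj :: "('a, 'b) monoid_scheme \<Rightarrow> 'a \<times> 'a \<Rightarrow> 'a \<times> 'a \<Rightarrow> bool" where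
  "pair_conj G P Q \<longleftrightarrow> (\<exists>q\<in>carrier G.
      q \<otimes>\<^bsub>G\<^esub> fst P \<otimes>\<^bsub>G\<^esub> inv\<^bsub>G\<^esub> q = fst Q \<and>
      q \<otimes>\<^bsub>G\<^esub> snd P \<otimes>\<^bsub>G\<^esub> inv\<^bsub>G\<^esub> q = snd Q)"

definition pair_class :: "('a, 'b) monoid_scheme \<Rightarrow> 'a set \<Rightarrow> ('a \<Rightarrow> 'a \<Rightarrow> enat) \<Rightarrow> 'a \<times> 'a \<Rightarrow> ('a \<times> 'a) set" where
  "pair_class G S m P = {Q \<in> braid_pairs S m. pair_conj G P Q}"

definition reduced_expr :: "('a, 'b) monoid_scheme \<Rightarrow> 'a set \<Rightarrow> 'a \<Rightarrow> 'a list \<Rightarrow> bool" where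
  "reduced_expr G S w xs \<longleftrightarrow> xs \<in> lists S \<and> word_eval G xs = w \<and>
     (\<forall>ys\<in>lists S. word_eval G ys = w \<longrightarrow> length xs \<le> length ys)"

definition braid_move :: "('a \<Rightarrow> 'a \<Rightarrow> enat) \<Rightarrow> 'a \<times> 'a \<Rightarrow> 'a list \<Rightarrow> 'a list \<Rightarrow> bool" where
  "braid_move m P xs ys \<longleftrightarrow> (\<exists>k u v. m (fst P) (snd P) = enat k \<and>
      xs = u @ alt_word (fst P) (snd P) k @ v \<and> ys = u @ alt_word (snd P) (fst P) k @ v)"

definition R_arcs :: "('a, 'b) monoid_scheme \<Rightarrow> 'a set \<Rightarrow> ('a \<Rightarrow> 'a \<Rightarrow> enat) \<Rightarrow> 'a
    \<Rightarrow> ('a list \<times> ('a \<times> 'a) \<times> 'a list) set" where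
  "R_arcs G S m w = {(xs, P, ys). P \<in> braid_pairs S m \<and> reduced_expr G S w xs \<and>
      reduced_expr G S w ys \<and> braid_move m P xs ys}"

definition arc_colour :: "('a, 'b) monoid_scheme \<Rightarrow> 'a set \<Rightarrow> ('a \<Rightarrow> 'a \<Rightarrow> enat)
    \<Rightarrow> ('a list \<times> ('a \<times> 'a) \<times> 'a list) \<Rightarrow> ('a \<times> 'a) set" where
  "arc_colour G S m e = pair_class G S m (fst (snd e))"

definition directed_cycle :: "('v \<times> 'c \<times> 'v) set \<Rightarrow> ('v \<times> 'c \<times> 'v) list \<Rightarrow> bool" where
  "directed_cycle A C \<longleftrightarrow> C \<noteq> [] \<and> set C \<subseteq> A \<and>
     (\<forall>i<length C. snd (snd (C ! i)) = fst (C ! ((Suc i) mod length C))) \<and>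
     distinct (map fst C)"

end

theory Submission
  imports Defs
begin


lemma alt_nth: "i < k \<Longrightarrow> alt_word s t k ! i = (if even i then s else t)"
  by (simp add: alt_word_def)
lemma alt_len[simp]: "length (alt_word s t k) = k" by (simp add: alt_word_def)
lemma alt_Suc: "alt_word s t (Suc k) = s # alt_word t s k"
proof (rule nth_equalityI)
  fix i assume "i < length (alt_word s t (Suc k))"
  then show "alt_word s t (Suc k) ! i = (s # alt_word t s k) ! i"
    by (cases i) (simp_all add: alt_nth)
qed simp
lemma alt_0[simp]: "alt_word s t 0 = []" by (simp add: alt_word_def)
lemma alt_set: "set (alt_word s t k) \<subseteq> {s, t}" by (auto simp: alt_word_def)
lemma alt_add: "alt_word s t (n + j) = alt_word s t n @ (if even n then alt_word s t j else alt_word t s j)"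
proof (rule nth_equalityI)
  fix i assume "i < length (alt_word s t (n + j))"
  then show "alt_word s t (n + j) ! i = (alt_word s t n @ (if even n then alt_word s t j else alt_word t s j)) ! i"
    by (cases "i < n") (auto simp: alt_nth nth_append)
qed simp
lemma alt_lists: "s \<in> S \<Longrightarrow> t \<in> S \<Longrightarrow> alt_word s t k \<in> lists S"
  unfolding in_lists_conv_set using alt_set[of s t k] by auto

locale cox = fixes G :: "('a, 'b) monoid_scheme" (structure) and S :: "'a set" and m :: "'a \<Rightarrow> 'a \<Rightarrow> enat"
  assumes cs: "coxeter_system G S m"
begin

lemma grp: "group G" using cs unfolding coxeter_system_def by auto
sublocale group G by (rule grp)

lemma S_carr: "S \<subseteq> carrier G" using cs unfolding coxeter_system_def by auto
lemma carr_eq: "carrier G = word_eval G ` lists S" using cs unfolding coxeter_system_def by auto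
lemma eval_iff: "xs \<in> lists S \<Longrightarrow> ys \<in> lists S \<Longrightarrow> word_eval G xs = word_eval G ys \<longleftrightarrow> (xs, ys) \<in> cox_cong S m"
  using cs unfolding coxeter_system_def by auto

abbreviation ev where "ev \<equiv> word_eval G"

lemma ev_Nil[simp]: "ev [] = \<one>" by (simp add: word_eval_def)
lemma ev_Cons[simp]: "ev (x#xs) = x \<otimes> ev xs" by (simp add: word_eval_def)
lemma ev_carr[simp]: "set xs \<subseteq> carrier G \<Longrightarrow> ev xs \<in> carrier G"
  by (induct xs) auto
lemma ev_carr'[simp]: "xs \<in> lists S \<Longrightarrow> ev xs \<in> carrier G"
  using S_carr by (intro ev_carr) auto
lemma ev_append: "set xs \<subseteq> carrier G \<Longrightarrow> set ys \<subseteq> carrier G \<Longrightarrow> ev (xs @ ys) = ev xs \<otimes> ev ys"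
  by (induct xs) (auto simp: m_assoc)
lemma ev_append'[simp]: "xs \<in> lists S \<Longrightarrow> ys \<in> lists S \<Longrightarrow> ev (xs @ ys) = ev xs \<otimes> ev ys"
  using S_carr by (intro ev_append) auto

lemma cong_lists: "(xs, ys) \<in> cox_cong S m \<Longrightarrow> xs \<in> lists S \<and> ys \<in> lists S"
proof (induct rule: cox_cong.induct)
  case (rel s t k) then show ?case using alt_lists by simp
next
  case (refl xs) then show ?case by simp
next
  case (sym xs ys) then show ?case by simp
next
  case (trans xs ys zs) then show ?case by simp
next
  case (ctxt xs ys u v) then show ?case by simp
qed

lemma cong_eval: "(xs, ys) \<in> cox_cong S m \<Longrightarrow> ev xs = ev ys"
  using cong_lists eval_iff by blast

lemma m_diag: "s \<in> S \<Longrightarrow> m s s = 1" using cs unfolding coxeter_system_def by blast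
lemma m_sym: "s \<in> S \<Longrightarrow> t \<in> S \<Longrightarrow> s \<noteq> t \<Longrightarrow> m s t = m t s"
  using cs unfolding coxeter_system_def by blast
lemma m_ge2: "s \<in> S \<Longrightarrow> t \<in> S \<Longrightarrow> s \<noteq> t \<Longrightarrow> m s t \<ge> 2"
  using cs unfolding coxeter_system_def by blast

lemma S_inv: "s \<in> S \<Longrightarrow> s \<otimes> s = \<one>"
proof -
  assume s: "s \<in> S"
  have "m s s = enat 1" using m_diag[OF s] by (simp add: one_enat_def)
  hence "(alt_word s s (2*1), []) \<in> cox_cong S m" by (rule cox_cong.rel[OF s s])
  hence "ev (alt_word s s (2*1)) = ev []" by (rule cong_eval)
  moreover have "alt_word s s (2*1) = [s, s]" by (simp add: alt_word_def numeral_2_eq_2)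
  moreover have "s \<in> carrier G" using s S_carr by auto
  ultimately show ?thesis by simp
qed

lemma S_inv': "s \<in> S \<Longrightarrow> inv s = s"
  using S_inv S_carr by (metis inv_equality subsetD)

lemma ev_rev: "xs \<in> lists S \<Longrightarrow> ev (rev xs) = inv (ev xs)"
proof (induct xs)
  case Nil then show ?case by simp
next
  case (Cons a xs)
  then have a: "a \<in> carrier G" using S_carr by auto
  have "ev (rev (a # xs)) = ev (rev xs @ [a])" by simp
  also have "\<dots> = ev (rev xs) \<otimes> ev [a]" using Cons by (intro ev_append') auto
  also have "\<dots> = inv (ev xs) \<otimes> a" using Cons a by simp
  also have "\<dots> = inv (a \<otimes> ev xs)" using Cons a by (simp add: inv_mult_group S_inv')
  finally show ?case by simp
qed

end


lemma alt_mid: "alt_word s t n @ [if even n then s else t] @ rev (alt_word s t n) = alt_word s t (2*n+1)"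
proof (rule nth_equalityI)
  fix i assume i: "i < length (alt_word s t n @ [if even n then s else t] @ rev (alt_word s t n))"
  show "(alt_word s t n @ [if even n then s else t] @ rev (alt_word s t n)) ! i = alt_word s t (2*n+1) ! i"
  proof (cases "i < n")
    case True then show ?thesis by (simp add: nth_append alt_nth)
  next
    case False
    show ?thesis
    proof (cases "i = n")
      case True then show ?thesis by (simp add: nth_append alt_nth)
    next
      case False
      with \<open>\<not> i < n\<close> i have "n < i" "i < 2*n+1" by auto
      define j where "j = i - Suc n"
      have j: "i = Suc n + j" "j < n" using \<open>n < i\<close> \<open>i < 2*n+1\<close> by (auto simp: j_def)
      then have "even (n - Suc j) = even i" by (cases "even n"; cases "even j") auto
      with j show ?thesis by (simp add: nth_append alt_nth rev_nth)
    qed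
  qed
qed simp

context cox begin

definition len :: "'a \<Rightarrow> nat" where
  "len g = (LEAST n. \<exists>x\<in>lists S. ev x = g \<and> length x = n)"

lemma len_le: "x \<in> lists S \<Longrightarrow> len (ev x) \<le> length x"
  unfolding len_def by (rule Least_le) auto

lemma len_ex: assumes "g \<in> carrier G" shows "\<exists>x\<in>lists S. ev x = g \<and> length x = len g"
proof -
  obtain x where "x \<in> lists S" "ev x = g" using assms carr_eq by auto
  then have "\<exists>n. \<exists>x\<in>lists S. ev x = g \<and> length x = n" by auto
  then show ?thesis unfolding len_def by (rule LeastI_ex)
qed

definition red :: "'a list \<Rightarrow> bool" where "red x \<longleftrightarrow> x \<in> lists S \<and> length x = len (ev x)"

lemma red_ex: "g \<in> carrier G \<Longrightarrow> \<exists>x. red x \<and> ev x = g"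
proof -
  assume "g \<in> carrier G"
  then obtain x where "x \<in> lists S" "ev x = g" "length x = len g" using len_ex by blast
  then show ?thesis unfolding red_def by auto
qed

lemma cong_parity: "(xs, ys) \<in> cox_cong S m \<Longrightarrow> even (length xs) = even (length ys)"
  by (induct rule: cox_cong.induct) auto

lemma ev_parity: "x \<in> lists S \<Longrightarrow> y \<in> lists S \<Longrightarrow> ev x = ev y \<Longrightarrow> even (length x) = even (length y)"
  by (rule cong_parity, rule eval_iff[THEN iffD1])

lemma len_parity: "x \<in> lists S \<Longrightarrow> even (len (ev x)) = even (length x)"
proof -
  assume x: "x \<in> lists S"
  then obtain y where "y \<in> lists S" "ev y = ev x" "length y = len (ev x)" using len_ex[of "ev x"] by auto
  then show ?thesis using ev_parity[of y x] x by simp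
qed

lemma len_one[simp]: "len \<one> = 0"
  using len_le[of "[]"] by simp

lemma len_S: "b \<in> S \<Longrightarrow> len b = 1"
proof -
  assume b: "b \<in> S"
  have "len (ev [b]) \<le> 1" using len_le[of "[b]"] b by simp
  moreover have "odd (len (ev [b]))" using len_parity[of "[b]"] b by simp
  ultimately have "len (ev [b]) = 1" by presburger
  then show ?thesis using b S_carr by auto
qed

lemma len_inv_le: assumes "h \<in> carrier G" shows "len (inv h) \<le> len h"
proof -
  obtain x where x: "x \<in> lists S" "ev x = h" "length x = len h" using len_ex assms by blast
  have r: "rev x \<in> lists S" using x by (auto simp: in_lists_conv_set)
  have "len (ev (rev x)) \<le> length (rev x)" by (rule len_le[OF r])
  moreover have "ev (rev x) = inv h" using ev_rev[OF x(1)] x(2) by simp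
  ultimately show ?thesis using x(3) by simp
qed

lemma len_inv: assumes "g \<in> carrier G" shows "len (inv g) = len g"
proof -
  have "len (inv (inv g)) \<le> len (inv g)" using assms by (intro len_inv_le) simp
  then have "len g \<le> len (inv g)" using assms by simp
  then show ?thesis using len_inv_le[OF assms] by simp
qed

lemma len_mult_le: assumes "g \<in> carrier G" "h \<in> carrier G" shows "len (g \<otimes> h) \<le> len g + len h"
proof -
  obtain x where x: "x \<in> lists S" "ev x = g" "length x = len g" using len_ex assms by blast
  obtain y where y: "y \<in> lists S" "ev y = h" "length y = len h" using len_ex assms by blast
  have "len (ev (x @ y)) \<le> length (x @ y)" using x y by (intro len_le) auto
  then show ?thesis using x y by simp
qed

lemma len_parity_mult: assumes "g \<in> carrier G" "h \<in> carrier G"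
  shows "even (len (g \<otimes> h)) = (even (len g) = even (len h))"
proof -
  obtain x where x: "x \<in> lists S" "ev x = g" "length x = len g" using len_ex assms by blast
  obtain y where y: "y \<in> lists S" "ev y = h" "length y = len h" using len_ex assms by blast
  have "even (len (ev (x @ y))) = even (length (x @ y))" using x y by (intro len_parity) auto
  then show ?thesis using x y by simp
qed

lemma len_Sl: assumes "b \<in> S" "g \<in> carrier G"
  shows "len (b \<otimes> g) = len g + 1 \<or> len (b \<otimes> g) + 1 = len g"
proof -
  have b: "b \<in> carrier G" using assms S_carr by auto
  have 1: "len (b \<otimes> g) \<le> len g + 1" using len_mult_le[OF b assms(2)] len_S[OF assms(1)] by simp
  have "g = b \<otimes> (b \<otimes> g)" using S_inv[OF assms(1)] b assms by (simp add: m_assoc[symmetric])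
  then have 2: "len g \<le> len (b \<otimes> g) + 1" using len_mult_le[OF b, of "b \<otimes> g"] len_S[OF assms(1)] b assms by simp
  have 3: "even (len (b \<otimes> g)) = (odd (len g))" using len_parity_mult[OF b assms(2)] len_S[OF assms(1)] by simp
  from 1 2 3 show ?thesis by presburger
qed

lemma len_Sr: assumes "b \<in> S" "g \<in> carrier G"
  shows "len (g \<otimes> b) = len g + 1 \<or> len (g \<otimes> b) + 1 = len g"
proof -
  have b: "b \<in> carrier G" using assms S_carr by auto
  have "inv (g \<otimes> b) = b \<otimes> inv g" using b assms by (simp add: inv_mult_group S_inv')
  then have "len (g \<otimes> b) = len (b \<otimes> inv g)" using len_inv[of "g \<otimes> b"] b assms by simp
  then show ?thesis using len_Sl[OF assms(1), of "inv g"] len_inv assms by simp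
qed

lemma cancel1: "a \<in> carrier G \<Longrightarrow> b \<in> carrier G \<Longrightarrow> a \<otimes> (inv a \<otimes> b) = b"
  by (simp add: m_assoc[symmetric])
lemma cancel2: "a \<in> carrier G \<Longrightarrow> b \<in> carrier G \<Longrightarrow> inv a \<otimes> (a \<otimes> b) = b"
  by (simp add: m_assoc[symmetric])
lemmas gs = m_assoc cancel1 cancel2 l_inv r_inv inv_mult_group inv_inv

definition cj :: "'a \<Rightarrow> 'a \<Rightarrow> 'a" where "cj g h = g \<otimes> h \<otimes> inv g"

lemma cj_carr[simp]: "g \<in> carrier G \<Longrightarrow> h \<in> carrier G \<Longrightarrow> cj g h \<in> carrier G"
  by (simp add: cj_def)

lemma cj_cj: "a \<in> carrier G \<Longrightarrow> b \<in> carrier G \<Longrightarrow> h \<in> carrier G \<Longrightarrow> cj a (cj b h) = cj (a \<otimes> b) h"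
  by (simp add: cj_def gs)

lemma cj_one[simp]: "h \<in> carrier G \<Longrightarrow> cj \<one> h = h" by (simp add: cj_def)

lemma cj_eq_iff: "g \<in> carrier G \<Longrightarrow> h \<in> carrier G \<Longrightarrow> r \<in> carrier G \<Longrightarrow> cj g r = h \<longleftrightarrow> r = cj (inv g) h"
proof
  assume "cj g r = h" "g \<in> carrier G" "h \<in> carrier G" "r \<in> carrier G"
  then show "r = cj (inv g) h" unfolding cj_def by (auto simp: gs)
next
  assume "r = cj (inv g) h" "g \<in> carrier G" "h \<in> carrier G" "r \<in> carrier G"
  then show "cj g r = h" unfolding cj_def by (auto simp: gs)
qed

lemma cj_mult: "g \<in> carrier G \<Longrightarrow> a \<in> carrier G \<Longrightarrow> b \<in> carrier G \<Longrightarrow> cj g (a \<otimes> b) = cj g a \<otimes> cj g b"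
  unfolding cj_def by (simp add: gs)

lemma cj_inj: "g \<in> carrier G \<Longrightarrow> a \<in> carrier G \<Longrightarrow> b \<in> carrier G \<Longrightarrow> cj g a = cj g b \<longleftrightarrow> a = b"
proof -
  assume a: "g \<in> carrier G" "a \<in> carrier G" "b \<in> carrier G"
  have "cj (inv g) (cj g b) = b" using a by (simp add: cj_cj)
  then show ?thesis using cj_eq_iff[of g "cj g b" a] a by auto
qed

lemma ev_map_cj: "g \<in> carrier G \<Longrightarrow> set x \<subseteq> carrier G \<Longrightarrow> ev (map (cj g) x) = cj g (ev x)"
  by (induct x) (auto simp: cj_def gs)

lemma len_cj_parity: "g \<in> carrier G \<Longrightarrow> h \<in> carrier G \<Longrightarrow> even (len (cj g h)) = even (len h)"
proof -
  assume a: "g \<in> carrier G" "h \<in> carrier G"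
  have "even (len (g \<otimes> h \<otimes> inv g)) = (even (len (g \<otimes> h)) = even (len (inv g)))"
    using a by (intro len_parity_mult) auto
  also have "\<dots> = (even (len h))" using a len_parity_mult[of g h] len_inv[of g] by auto
  finally show ?thesis by (simp add: cj_def)
qed

primrec RL :: "'a list \<Rightarrow> 'a list" where
  "RL [] = []"
| "RL (a # x) = a # map (cj a) (RL x)"

lemma RL_len[simp]: "length (RL x) = length x" by (induct x) auto

lemma RL_carr: "x \<in> lists S \<Longrightarrow> set (RL x) \<subseteq> carrier G"
proof (induct x)
  case (Cons a x)
  then have "a \<in> carrier G" using S_carr by auto
  then show ?case using Cons by auto
qed simp

lemma RL_append: "x \<in> lists S \<Longrightarrow> y \<in> lists S \<Longrightarrow> RL (x @ y) = RL x @ map (cj (ev x)) (RL y)"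
proof (induct x)
  case Nil
  have "map (cj \<one>) (RL y) = RL y" using RL_carr[OF Nil(2)] by (intro map_idI) auto
  then show ?case by simp
next
  case (Cons a x)
  have a: "a \<in> carrier G" using Cons S_carr by auto
  have "map (cj a) (map (cj (ev x)) (RL y)) = map (cj (a \<otimes> ev x)) (RL y)"
  proof -
    have e: "ev x \<in> carrier G" using Cons by auto
    have r: "set (RL y) \<subseteq> carrier G" using RL_carr Cons by auto
    have "\<forall>h\<in>set (RL y). cj a (cj (ev x) h) = cj (a \<otimes> ev x) h"
      using cj_cj[OF a e] r by blast
    then show ?thesis by simp
  qed
  then show ?case using Cons by simp
qed

lemma count_map_cj: "g \<in> carrier G \<Longrightarrow> h \<in> carrier G \<Longrightarrow> set L \<subseteq> carrier G \<Longrightarrow>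
   count_list (map (cj g) L) h = count_list L (cj (inv g) h)"
  by (induct L) (auto simp: cj_eq_iff)

lemma rev_lists: "x \<in> lists S \<Longrightarrow> rev x \<in> lists S" by (auto simp: in_lists_conv_set)

lemma cj_word: assumes "x \<in> lists S" "c \<in> S" shows "cj (ev x) c = ev (x @ [c] @ rev x)"
proof -
  have r: "rev x \<in> lists S" using rev_lists assms by auto
  have c: "c \<in> carrier G" using assms S_carr by auto
  have "ev (x @ [c] @ rev x) = ev x \<otimes> ev ([c] @ rev x)" using assms r by (intro ev_append') auto
  also have "ev ([c] @ rev x) = c \<otimes> inv (ev x)" using ev_rev[OF assms(1)] by simp
  finally show ?thesis using c assms by (simp add: cj_def m_assoc)
qed

lemma RL_alt: "RL (alt_word s t n) = map (\<lambda>i. ev (alt_word s t (2*i+1))) [0..<n]"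
  if "s \<in> S" "t \<in> S"
proof (induct n)
  case 0 then show ?case by simp
next
  case (Suc n)
  have e: "alt_word s t (Suc n) = alt_word s t n @ [if even n then s else t]"
    using alt_add[of s t n 1] by (simp add: alt_word_def)
  have l: "alt_word s t n \<in> lists S" using alt_lists[OF that] .
  have c: "(if even n then s else t) \<in> S" using that by auto
  have "cj (ev (alt_word s t n)) (if even n then s else t)
     = ev (alt_word s t n @ [if even n then s else t] @ rev (alt_word s t n))"
    by (rule cj_word[OF l c])
  also have "\<dots> = ev (alt_word s t (2*n+1))" by (simp only: alt_mid)
  finally show ?case using Suc e l c by (simp add: RL_append)
qed

lemma count_periodic:
  assumes "\<And>i. f (i + k) = f i"
  shows "count_list (map f [0..<2*k]) h = 2 * count_list (map f [0..<k]) h"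
proof -
  have kk: "2*k = k+k" by simp
  have u: "[0..<2*k] = [0..<k] @ [k..<k+k]" unfolding kk using upt_add_eq_append[of 0 k k] by simp
  have "map f [k..<k+k] = map f [0..<k]"
  proof (rule nth_equalityI)
    show "length (map f [k..<k+k]) = length (map f [0..<k])" by simp
  next
    fix i assume "i < length (map f [k..<k+k])"
    then have "i < k" by simp
    then have "map f [k..<k+k] ! i = f (k + i)" "map f [0..<k] ! i = f i" by simp_all
    then show "map f [k..<k+k] ! i = map f [0..<k] ! i" using assms[of i] by (simp add: add.commute)
  qed
  then show ?thesis unfolding u by simp
qed

lemma cong_RL_parity: "(xs, ys) \<in> cox_cong S m \<Longrightarrow> h \<in> carrier G \<Longrightarrow>
  even (count_list (RL xs) h) = even (count_list (RL ys) h)"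
proof (induct arbitrary: h rule: cox_cong.induct)
  case (rel s t k)
  have "(alt_word s t (2*k), []) \<in> cox_cong S m" using rel(1-3) by (rule cox_cong.rel)
  then have "ev (alt_word s t (2*k)) = ev []" by (rule cong_eval)
  then have one: "ev (alt_word s t (2*k)) = \<one>" by simp
  have "(\<lambda>i. ev (alt_word s t (2*(i+k)+1))) i = ev (alt_word s t (2*i+1))" for i
  proof -
    have "alt_word s t (2*(i+k)+1) = alt_word s t (2*k) @ alt_word s t (2*i+1)"
      using alt_add[of s t "2*k" "2*i+1"] by (simp add: algebra_simps)
    moreover have "ev (alt_word s t (2*k) @ alt_word s t (2*i+1)) = ev (alt_word s t (2*k)) \<otimes> ev (alt_word s t (2*i+1))"
      using alt_lists[OF rel(1,2)] by (rule ev_append') (rule alt_lists[OF rel(1,2)])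
    moreover have "ev (alt_word s t (2*i+1)) \<in> carrier G" using alt_lists[OF rel(1,2)] by (rule ev_carr')
    ultimately show ?thesis using one by simp
  qed
  then have "count_list (RL (alt_word s t (2*k))) h = 2 * count_list (map (\<lambda>i. ev (alt_word s t (2*i+1))) [0..<k]) h"
    using RL_alt[OF rel(1,2)] count_periodic[of "\<lambda>i. ev (alt_word s t (2*i+1))" k] by simp
  then show ?case by simp
next
  case (refl xs) then show ?case by simp
next
  case (sym xs ys) then show ?case by simp
next
  case (trans xs ys zs) then show ?case by simp
next
  case (ctxt xs ys u v)
  have l: "xs \<in> lists S" "ys \<in> lists S" using cong_lists ctxt by auto
  have e: "ev xs = ev ys" using cong_eval ctxt by auto
  have cu: "ev u \<in> carrier G" "ev xs \<in> carrier G" using ctxt l by auto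
  have "even (count_list (RL xs) (cj (inv (ev u)) h)) = even (count_list (RL ys) (cj (inv (ev u)) h))"
    using ctxt cu by auto
  then show ?case using l ctxt cu e RL_carr by (simp add: RL_append count_map_cj)
qed

lemma RL_parity: "x \<in> lists S \<Longrightarrow> y \<in> lists S \<Longrightarrow> ev x = ev y \<Longrightarrow> h \<in> carrier G \<Longrightarrow>
  even (count_list (RL x) h) = even (count_list (RL y) h)"
  by (rule cong_RL_parity, rule eval_iff[THEN iffD1])

end


definition del :: "nat \<Rightarrow> 'x list \<Rightarrow> 'x list" where "del i y = take i y @ drop (Suc i) y"

lemma del_len: "i < length y \<Longrightarrow> length (del i y) = length y - 1"
  by (simp add: del_def)
lemma del_set: "set (del i y) \<subseteq> set y"
  unfolding del_def using set_take_subset[of i y] set_drop_subset[of "Suc i" y] by auto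
lemma del_lists: "y \<in> lists S \<Longrightarrow> del i y \<in> lists S"
  using del_set[of i y] unfolding in_lists_conv_set by auto
lemma take_lists: "x \<in> lists S \<Longrightarrow> take i x \<in> lists S"
  unfolding in_lists_conv_set by (auto dest: in_set_takeD)
lemma drop_lists: "x \<in> lists S \<Longrightarrow> drop i x \<in> lists S"
  unfolding in_lists_conv_set by (auto dest: in_set_dropD)
lemma nth_lists: "x \<in> lists S \<Longrightarrow> i < length x \<Longrightarrow> x ! i \<in> S"
  unfolding in_lists_conv_set by auto

lemma del_rev: assumes "i < length y" shows "del i (rev y) = rev (del (length y - Suc i) y)"
proof -
  have a: "Suc (length y - Suc i) = length y - i" using assms by simp
  show ?thesis unfolding del_def rev_append rev_take rev_drop a using assms by simp
qed

context cox begin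

lemma S_cancel: "a \<in> S \<Longrightarrow> b \<in> carrier G \<Longrightarrow> a \<otimes> (a \<otimes> b) = b"
proof -
  assume a: "a \<in> S" "b \<in> carrier G"
  then have "a \<in> carrier G" using S_carr by auto
  then show ?thesis using a S_inv[OF a(1)] by (simp add: m_assoc[symmetric])
qed

lemma RL_nth: assumes "x \<in> lists S" "i < length x" shows "RL x ! i = cj (ev (take i x)) (x ! i)"
proof -
  have d: "x = take i x @ (x ! i # drop (Suc i) x)" using assms id_take_nth_drop by blast
  have l1: "take i x \<in> lists S" using take_lists[OF assms(1)] .
  have l2: "x ! i # drop (Suc i) x \<in> lists S" using nth_lists[OF assms] drop_lists[OF assms(1)] by simp
  have "RL x = RL (take i x) @ map (cj (ev (take i x))) (RL (x ! i # drop (Suc i) x))"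
    by (subst d, rule RL_append[OF l1 l2])
  moreover have "length (RL (take i x)) = i" using assms by simp
  ultimately show ?thesis by (simp add: nth_append)
qed

lemma RL_del: assumes "x \<in> lists S" "i < length x" shows "RL x ! i \<otimes> ev x = ev (del i x)"
proof -
  have d: "x = take i x @ (x ! i # drop (Suc i) x)" using assms id_take_nth_drop by blast
  have l1: "take i x \<in> lists S" using take_lists[OF assms(1)] .
  have l2: "x ! i # drop (Suc i) x \<in> lists S" using nth_lists[OF assms] drop_lists[OF assms(1)] by simp
  have l3: "drop (Suc i) x \<in> lists S" using l2 by simp
  have a: "x ! i \<in> S" using l2 by simp
  then have ac: "x ! i \<in> carrier G" using S_carr by auto
  have c1: "ev (take i x) \<in> carrier G" "ev (drop (Suc i) x) \<in> carrier G" using l1 l3 by auto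
  have "ev x = ev (take i x) \<otimes> (x ! i \<otimes> ev (drop (Suc i) x))"
    by (subst d, simp only: ev_append'[OF l1 l2] ev_Cons)
  then have "RL x ! i \<otimes> ev x = ev (take i x) \<otimes> (x ! i \<otimes> (inv (ev (take i x)) \<otimes>
      (ev (take i x) \<otimes> (x ! i \<otimes> ev (drop (Suc i) x)))))"
    using RL_nth[OF assms] c1 ac by (simp add: cj_def m_assoc)
  also have "\<dots> = ev (take i x) \<otimes> ev (drop (Suc i) x)"
    using c1 ac a by (simp add: cancel2 S_cancel)
  also have "\<dots> = ev (del i x)" unfolding del_def using l1 l3 by simp
  finally show ?thesis .
qed

lemma RL_inv: assumes "x \<in> lists S" "i < length x" shows "RL x ! i \<otimes> RL x ! i = \<one>"
proof -
  have l2: "x ! i \<in> S" using nth_lists[OF assms] .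
  have l1: "take i x \<in> lists S" using take_lists[OF assms(1)] .
  have c: "ev (take i x) \<in> carrier G" "x ! i \<in> carrier G" using l1 l2 S_carr by auto
  show ?thesis using RL_nth[OF assms] c S_cancel[OF l2] by (simp add: cj_def m_assoc cancel2)
qed

lemma red_lists: "red x \<Longrightarrow> x \<in> lists S" by (simp add: red_def)
lemma red_len: "red x \<Longrightarrow> length x = len (ev x)" by (simp add: red_def)
lemma red_min: "red x \<Longrightarrow> y \<in> lists S \<Longrightarrow> ev y = ev x \<Longrightarrow> length x \<le> length y"
  using len_le red_len by metis

lemma exch:
  assumes b: "b \<in> S" and y: "red y" and lt: "len (b \<otimes> ev y) < len (ev y)"
  shows "\<exists>i<length y. b \<otimes> ev y = ev (del i y)"
proof (cases "b \<in> set (RL y)")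
  case True
  then obtain i where i: "i < length y" "RL y ! i = b" by (auto simp: in_set_conv_nth)
  then show ?thesis using RL_del[OF red_lists[OF y] i(1)] by auto
next
  case False
  have yl: "y \<in> lists S" using y red_lists by auto
  have bc: "b \<in> carrier G" using b S_carr by auto
  have ec: "ev y \<in> carrier G" using yl by simp
  obtain z where z: "red z" "ev z = b \<otimes> ev y" using red_ex[of "b \<otimes> ev y"] bc ec by auto
  have zl: "z \<in> lists S" using z red_lists by auto
  have bz: "b # z \<in> lists S" using zl b by simp
  have e: "ev (b # z) = ev y" using z bc ec S_cancel[OF b ec] by simp
  have p: "even (count_list (RL (b # z)) b) = even (count_list (RL y) b)"
    by (rule RL_parity[OF bz yl e bc])
  have "count_list (RL (b # z)) b = 1 + count_list (RL z) b"
    using count_map_cj[OF bc bc RL_carr[OF zl]] bc S_inv'[OF b] by (simp add: cj_def S_inv[OF b])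
  moreover have "count_list (RL y) b = 0" using False by (simp add: count_list_0_iff)
  ultimately have "odd (count_list (RL z) b)" using p by simp
  then have "count_list (RL z) b \<noteq> 0" by (metis even_zero)
  then have "b \<in> set (RL z)" by (simp add: count_list_0_iff)
  then obtain i where i: "i < length z" "RL z ! i = b" by (auto simp: in_set_conv_nth)
  have "ev (del i z) = b \<otimes> (b \<otimes> ev y)" using RL_del[OF zl i(1)] i z by simp
  also have "\<dots> = ev y" using S_cancel[OF b ec] .
  finally have "length y \<le> length (del i z)" using red_min[OF y del_lists[OF zl]] by simp
  moreover have "length (del i z) < length z" using i del_len[OF i(1)] by simp
  moreover have "length z = len (b \<otimes> ev y)" using z red_len by simp
  ultimately show ?thesis using lt red_len[OF y] by simp
qed

lemma RL_distinct: assumes y: "red y" shows "distinct (RL y)"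
proof (rule ccontr)
  assume "\<not> distinct (RL y)"
  then obtain i' j' where "i' < length y" "j' < length y" "i' \<noteq> j'" "RL y ! i' = RL y ! j'"
    unfolding distinct_conv_nth by auto
  then obtain i j where ij: "i < j" "j < length y" "RL y ! i = RL y ! j"
    by (cases "i' < j'") (auto intro: that[of i' j'] that[of j' i'])
  have yl: "y \<in> lists S" using y red_lists by auto
  have dl: "del j y \<in> lists S" using del_lists[OF yl] .
  have il: "i < length (del j y)" using ij del_len[OF ij(2)] by simp
  have "RL (del j y) ! i = RL y ! i"
  proof -
    have "take i (del j y) = take i y" using ij by (simp add: del_def take_append min_def)
    moreover have "del j y ! i = y ! i" using ij by (simp add: del_def nth_append)
    ultimately show ?thesis using RL_nth[OF dl il] RL_nth[OF yl] ij by simp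
  qed
  then have "ev (del i (del j y)) = RL y ! i \<otimes> (RL y ! j \<otimes> ev y)"
    using RL_del[OF dl il] RL_del[OF yl ij(2)] by simp
  also have "\<dots> = ev y"
  proof -
    have c: "RL y ! i \<in> carrier G" "ev y \<in> carrier G" using RL_carr[OF yl] ij yl by auto
    show ?thesis using RL_inv[OF yl, of i] ij c by (simp add: m_assoc[symmetric])
  qed
  finally have "length y \<le> length (del i (del j y))" using red_min[OF y del_lists[OF dl]] by simp
  then show False using ij del_len[OF ij(2)] del_len[OF il] il by simp
qed

lemma red_rev: assumes "red y" shows "red (rev y)"
proof -
  have yl: "y \<in> lists S" using assms red_lists by auto
  show ?thesis using assms rev_lists[OF yl] len_inv[of "ev y"] yl by (simp add: red_def ev_rev)
qed

lemma exch_r: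
  assumes b: "b \<in> S" and y: "red y" and lt: "len (ev y \<otimes> b) < len (ev y)"
  shows "\<exists>i<length y. ev y \<otimes> b = ev (del i y)"
proof -
  have yl: "y \<in> lists S" using y red_lists by auto
  have bc: "b \<in> carrier G" using b S_carr by auto
  have ec: "ev y \<in> carrier G" using yl by simp
  have r: "red (rev y)" using red_rev[OF y] .
  have e: "ev (rev y) = inv (ev y)" using ev_rev[OF yl] .
  have "b \<otimes> ev (rev y) = inv (ev y \<otimes> b)" using e bc ec by (simp add: inv_mult_group S_inv'[OF b])
  then have "len (b \<otimes> ev (rev y)) = len (ev y \<otimes> b)" using len_inv bc ec by simp
  also have "\<dots> < len (ev (rev y))" using lt e len_inv ec by simp
  finally obtain i where i: "i < length (rev y)" "b \<otimes> ev (rev y) = ev (del i (rev y))"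
    using exch[OF b r] by blast
  have i': "i < length y" using i by simp
  have dl: "del (length y - Suc i) y \<in> lists S" using del_lists[OF yl] .
  have "ev y \<otimes> b = inv (b \<otimes> ev (rev y))" using e bc ec by (simp add: inv_mult_group S_inv'[OF b])
  also have "\<dots> = inv (ev (rev (del (length y - Suc i) y)))" using i(2) del_rev[OF i'] by simp
  also have "\<dots> = ev (del (length y - Suc i) y)" using ev_rev[OF dl] dl by simp
  finally show ?thesis using i' by (intro exI[of _ "length y - Suc i"]) simp
qed

lemma red_sub: "x \<in> lists S \<Longrightarrow> \<exists>y. red y \<and> ev y = ev x \<and> set y \<subseteq> set x"
proof (induct x rule: rev_induct)
  case Nil then show ?case by (intro exI[of _ "[]"]) (simp add: red_def)
next
  case (snoc a x)
  then have xl: "x \<in> lists S" and a: "a \<in> S" by auto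
  then obtain y where y: "red y" "ev y = ev x" "set y \<subseteq> set x" using snoc by auto
  have yl: "y \<in> lists S" using y red_lists by auto
  have ac: "a \<in> carrier G" using a S_carr by auto
  have ec: "ev y \<in> carrier G" using yl by simp
  have e: "ev (x @ [a]) = ev y \<otimes> a" using xl a ac y by simp
  from len_Sr[OF a ec] show ?case
  proof
    assume h: "len (ev y \<otimes> a) = len (ev y) + 1"
    have "red (y @ [a])" using h yl a ac red_len[OF y(1)] by (simp add: red_def)
    moreover have "ev (y @ [a]) = ev y \<otimes> a" using yl a ac by simp
    ultimately show ?thesis using e y by (intro exI[of _ "y @ [a]"]) auto
  next
    assume h: "len (ev y \<otimes> a) + 1 = len (ev y)"
    then obtain i where i: "i < length y" "ev y \<otimes> a = ev (del i y)" using exch_r[OF a y(1)] by force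
    have "red (del i y)" using i h del_len[OF i(1)] red_len[OF y(1)] del_lists[OF yl] by (simp add: red_def)
    moreover have "set (del i y) \<subseteq> set (x @ [a])" using del_set[of i y] y by auto
    ultimately show ?thesis using e i by (intro exI[of _ "del i y"]) auto
  qed
qed

end


lemma del_append1: "i < length a \<Longrightarrow> del i (a @ b) = del i a @ b"
  by (simp add: del_def)
lemma del_append2: "length a \<le> i \<Longrightarrow> del i (a @ b) = a @ del (i - length a) b"
  by (simp add: del_def Suc_diff_le)

context cox begin

definition W :: "'a set \<Rightarrow> 'a set" where "W I = ev ` lists I"

lemma W_carr: "I \<subseteq> carrier G \<Longrightarrow> g \<in> W I \<Longrightarrow> g \<in> carrier G"
  unfolding W_def in_lists_conv_set by (auto intro!: ev_carr)

lemma W_one: "\<one> \<in> W I" unfolding W_def by (rule image_eqI[of _ _ "[]"]) auto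

lemma W_gen: "a \<in> I \<Longrightarrow> I \<subseteq> carrier G \<Longrightarrow> a \<in> W I"
  unfolding W_def by (rule image_eqI[of _ _ "[a]"]) auto

lemma W_mult: assumes "I \<subseteq> carrier G" "g \<in> W I" "h \<in> W I" shows "g \<otimes> h \<in> W I"
proof -
  obtain x y where "x \<in> lists I" "y \<in> lists I" "g = ev x" "h = ev y" using assms unfolding W_def by auto
  moreover then have "set x \<subseteq> carrier G" "set y \<subseteq> carrier G" using assms(1) by auto
  ultimately show ?thesis unfolding W_def by (intro image_eqI[of _ _ "x @ y"]) (auto simp: ev_append)
qed

lemma W_inv: assumes "I \<subseteq> S" "g \<in> W I" shows "inv g \<in> W I"
proof -
  obtain x where x: "x \<in> lists I" "g = ev x" using assms unfolding W_def by auto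
  then have "x \<in> lists S" using assms(1) by auto
  then have "inv g = ev (rev x)" using x ev_rev by simp
  moreover have "rev x \<in> lists I" using x(1) by (auto simp: in_lists_conv_set)
  ultimately show ?thesis unfolding W_def by auto
qed

lemma W_red: assumes "I \<subseteq> S" "g \<in> W I" shows "\<exists>y. red y \<and> ev y = g \<and> y \<in> lists I"
proof -
  obtain x where x: "x \<in> lists I" "g = ev x" using assms unfolding W_def by auto
  then have "x \<in> lists S" using assms(1) by auto
  then obtain y where "red y" "ev y = ev x" "set y \<subseteq> set x" using red_sub by blast
  moreover then have "y \<in> lists I" using x(1) by (auto simp: in_lists_conv_set)
  ultimately show ?thesis using x by auto
qed

lemma W_len1: assumes "I \<subseteq> S" "r \<in> W I" "len r = 1" shows "r \<in> I"
proof -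
  obtain y where y: "red y" "ev y = r" "y \<in> lists I" using W_red assms by blast
  then have "length y = 1" using red_len assms by simp
  then obtain a where "y = [a]" by (cases y) auto
  then show ?thesis using y assms S_carr by auto
qed

lemma W_cj: assumes "I \<subseteq> carrier G" "g \<in> carrier G" shows "cj g ` W I = W (cj g ` I)"
proof
  show "cj g ` W I \<subseteq> W (cj g ` I)"
  proof
    fix h assume "h \<in> cj g ` W I"
    then obtain x where x: "x \<in> lists I" "h = cj g (ev x)" unfolding W_def by auto
    then have "set x \<subseteq> carrier G" using assms by auto
    then have "h = ev (map (cj g) x)" using x ev_map_cj assms by simp
    moreover have "map (cj g) x \<in> lists (cj g ` I)" using x(1) by auto
    ultimately show "h \<in> W (cj g ` I)" unfolding W_def by auto
  qed
next
  show "W (cj g ` I) \<subseteq> cj g ` W I"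
  proof
    fix h assume "h \<in> W (cj g ` I)"
    then obtain x where x: "x \<in> lists (cj g ` I)" "h = ev x" unfolding W_def by auto
    then obtain y where y: "y \<in> lists I" "x = map (cj g) y"
      by (metis lists_image image_iff)
    then have "set y \<subseteq> carrier G" using assms by auto
    then have "h = cj g (ev y)" using x y ev_map_cj assms by simp
    then show "h \<in> cj g ` W I" using y unfolding W_def by auto
  qed
qed

lemma W_cj_self: assumes "I \<subseteq> S" "a \<in> W I" shows "cj a ` W I = W I"
proof -
  have IC: "I \<subseteq> carrier G" using assms S_carr by auto
  have ac: "a \<in> carrier G" using W_carr[OF IC assms(2)] .
  have sub: "cj b ` W I \<subseteq> W I" if "b \<in> W I" for b
  proof
    fix h assume "h \<in> cj b ` W I"
    then obtain k where k: "k \<in> W I" "h = cj b k" by auto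
    have "b \<otimes> k \<otimes> inv b \<in> W I" using W_mult[OF IC] W_inv[OF assms(1)] that k by simp
    then show "h \<in> W I" using k by (simp add: cj_def)
  qed
  show ?thesis
  proof
    show "cj a ` W I \<subseteq> W I" using sub[OF assms(2)] .
  next
    show "W I \<subseteq> cj a ` W I"
    proof
      fix h assume h: "h \<in> W I"
      have hc: "h \<in> carrier G" using W_carr[OF IC h] .
      have "cj (inv a) h \<in> W I" using sub[OF W_inv[OF assms]] h by auto
      moreover have "cj a (cj (inv a) h) = h" using ac hc by (simp add: cj_cj)
      ultimately show "h \<in> cj a ` W I" by (metis image_eqI)
    qed
  qed
qed

lemma red_tl: "red (b # y) \<Longrightarrow> red y"
proof -
  assume r: "red (b # y)"
  have "b # y \<in> lists S" using red_lists[OF r] .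
  then have l: "b \<in> S" "y \<in> lists S" by auto
  obtain z where z: "red z" "ev z = ev y" using red_ex[of "ev y"] l by auto
  have "ev (b # z) = ev (b # y)" using z by simp
  moreover have "b # z \<in> lists S" using l z red_lists by auto
  ultimately have "length (b # y) \<le> length (b # z)" using red_min[OF r] by metis
  then have "length y \<le> length z" by simp
  moreover have "length z \<le> length y" using red_min[OF z(1) l(2)] z by simp
  ultimately show ?thesis using z l red_len by (simp add: red_def)
qed

lemma red_append: "x \<in> lists S \<Longrightarrow> y \<in> lists S \<Longrightarrow> length x + length y = len (ev x \<otimes> ev y) \<Longrightarrow> red (x @ y)"
  by (simp add: red_def)

lemma len_add_left:
  assumes I: "I \<subseteq> S" and g0: "g0 \<in> carrier G"
    and mn: "\<And>u. u \<in> W I \<Longrightarrow> len g0 \<le> len (u \<otimes> g0)"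
    and u: "u \<in> W I"
  shows "len (u \<otimes> g0) = len u + len g0"
proof -
  have IC: "I \<subseteq> carrier G" using I S_carr by auto
  have main: "\<And>y. red y \<Longrightarrow> y \<in> lists I \<Longrightarrow> len (ev y \<otimes> g0) = length y + len g0"
  proof -
    fix y show "red y \<Longrightarrow> y \<in> lists I \<Longrightarrow> len (ev y \<otimes> g0) = length y + len g0"
    proof (induct y)
      case Nil then show ?case using g0 by simp
    next
      case (Cons b y)
      have ry: "red y" using red_tl[OF Cons(2)] .
      have yI: "y \<in> lists I" and bI: "b \<in> I" using Cons(3) by auto
      have yl: "y \<in> lists S" using red_lists[OF ry] .
      have bS: "b \<in> S" using bI I by auto
      have bc: "b \<in> carrier G" using bS S_carr by auto
      have ec: "ev y \<in> carrier G" using yl by simp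
      have IH: "len (ev y \<otimes> g0) = length y + len g0" using Cons ry yI by simp
      obtain z2 where z2: "red z2" "ev z2 = g0" using red_ex[OF g0] by auto
      have z2l: "z2 \<in> lists S" using red_lists[OF z2(1)] .
      have rz: "red (y @ z2)" using IH z2 red_len[OF z2(1)] yl z2l by (intro red_append) auto
      have evz: "ev (y @ z2) = ev y \<otimes> g0" using yl z2l z2 by simp
      have gc: "ev y \<otimes> g0 \<in> carrier G" using ec g0 by simp
      have eb: "ev (b # y) \<otimes> g0 = b \<otimes> (ev y \<otimes> g0)" using bc ec g0 by (simp add: m_assoc)
      from len_Sl[OF bS gc] show ?case
      proof
        assume "len (b \<otimes> (ev y \<otimes> g0)) = len (ev y \<otimes> g0) + 1"
        then show ?thesis using IH eb by simp
      next
        assume dec: "len (b \<otimes> (ev y \<otimes> g0)) + 1 = len (ev y \<otimes> g0)"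
        then have "len (b \<otimes> ev (y @ z2)) < len (ev (y @ z2))" using evz by simp
        then obtain i where i: "i < length (y @ z2)" "b \<otimes> ev (y @ z2) = ev (del i (y @ z2))"
          using exch[OF bS rz] by blast
        show ?thesis
        proof (cases "i < length y")
          case True
          have dl: "del i y \<in> lists S" using del_lists[OF yl] .
          have "b \<otimes> ev y \<otimes> g0 = ev (del i y) \<otimes> g0"
            using i(2) evz del_append1[OF True] dl z2l z2 bc ec g0 by (simp add: m_assoc)
          then have "b \<otimes> ev y = ev (del i y)" using bc ec g0 dl by (simp add: m_assoc[symmetric])
          then have "ev (b # y) = ev (del i y)" by simp
          then have "length (b # y) \<le> length (del i y)" using red_min[OF Cons(2) dl] by simp
          then show ?thesis using del_len[OF True] by simp
        next
          case False
          define j where "j = i - length y"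
          have j: "j < length z2" using i False by (simp add: j_def)
          have dl: "del j z2 \<in> lists S" using del_lists[OF z2l] .
          have dc: "ev (del j z2) \<in> carrier G" using dl by simp
          have "b \<otimes> (ev y \<otimes> g0) = ev y \<otimes> ev (del j z2)"
            using i(2) evz del_append2[of y i z2] False dl yl by (simp add: j_def)
          then have "ev (del j z2) = inv (ev y) \<otimes> b \<otimes> ev y \<otimes> g0"
            using bc ec g0 dc by (simp add: m_assoc cancel2)
          moreover have "inv (ev y) \<otimes> b \<otimes> ev y \<in> W I"
          proof -
            have "ev y \<in> W I" using yI unfolding W_def by auto
            then show ?thesis using W_mult[OF IC] W_inv[OF I] W_gen[OF bI IC] by simp
          qed
          ultimately have "len g0 \<le> len (ev (del j z2))" using mn by metis
          moreover have "length (del j z2) < length z2" using del_len[OF j] j by simp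
          moreover have "len (ev (del j z2)) \<le> length (del j z2)" using len_le[OF dl] .
          ultimately show ?thesis using red_len[OF z2(1)] z2 by simp
        qed
      qed
    qed
  qed
  obtain y where "red y" "ev y = u" "y \<in> lists I" using W_red[OF I u] by auto
  then show ?thesis using main red_len by metis
qed

end


context cox begin

lemma len_add_right:
  assumes J: "J \<subseteq> S" and g0: "g0 \<in> carrier G"
    and mn: "\<And>v. v \<in> W J \<Longrightarrow> len g0 \<le> len (g0 \<otimes> v)"
    and v: "v \<in> W J"
  shows "len (g0 \<otimes> v) = len g0 + len v"
proof -
  have JC: "J \<subseteq> carrier G" using J S_carr by auto
  have ig: "inv g0 \<in> carrier G" using g0 by simp
  have mn': "len (inv g0) \<le> len (u \<otimes> inv g0)" if u: "u \<in> W J" for u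
  proof -
    have uc: "u \<in> carrier G" using W_carr[OF JC u] .
    have "inv (g0 \<otimes> inv u) = u \<otimes> inv g0" using uc g0 by (simp add: inv_mult_group)
    then have "len (u \<otimes> inv g0) = len (g0 \<otimes> inv u)" using len_inv[of "g0 \<otimes> inv u"] uc g0 by simp
    moreover have "len g0 \<le> len (g0 \<otimes> inv u)" using mn W_inv[OF J u] by blast
    ultimately show ?thesis using len_inv[OF g0] by simp
  qed
  have vc: "v \<in> carrier G" using W_carr[OF JC v] .
  have "len (inv v \<otimes> inv g0) = len (inv v) + len (inv g0)"
    by (rule len_add_left[OF J ig mn' W_inv[OF J v]])
  moreover have "inv v \<otimes> inv g0 = inv (g0 \<otimes> v)" using vc g0 by (simp add: inv_mult_group)
  ultimately show ?thesis using len_inv vc g0 by simp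
qed

lemma kilmoyer:
  assumes I: "I \<subseteq> S" and J: "J \<subseteq> S" and g0: "g0 \<in> carrier G"
    and mn: "\<And>u v. u \<in> W I \<Longrightarrow> v \<in> W J \<Longrightarrow> len g0 \<le> len (u \<otimes> g0 \<otimes> v)"
  shows "u \<in> W I \<Longrightarrow> v \<in> W J \<Longrightarrow> u \<otimes> g0 = g0 \<otimes> v \<Longrightarrow> u \<in> W (I \<inter> cj g0 ` J)"
proof (induct "len u" arbitrary: u v rule: less_induct)
  case less
  have IC: "I \<subseteq> carrier G" using I S_carr by auto
  have JC: "J \<subseteq> carrier G" using J S_carr by auto
  have uc: "u \<in> carrier G" using W_carr[OF IC less(2)] .
  have vc: "v \<in> carrier G" using W_carr[OF JC less(3)] .
  have mnl: "len g0 \<le> len (u' \<otimes> g0)" if "u' \<in> W I" for u'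
    using mn[OF that W_one] that W_carr[OF IC that] g0 by simp
  have mnr: "len g0 \<le> len (g0 \<otimes> v')" if "v' \<in> W J" for v'
    using mn[OF W_one that] that W_carr[OF JC that] g0 by simp
  obtain y where y: "red y" "ev y = u" "y \<in> lists I" using W_red[OF I less(2)] by auto
  show ?case
  proof (cases y)
    case Nil then show ?thesis using y W_one by auto
  next
    case (Cons b y')
    have bI: "b \<in> I" and y'I: "y' \<in> lists I" using y Cons by auto
    have bS: "b \<in> S" using bI I by auto
    have bc: "b \<in> carrier G" using bS S_carr by auto
    have ry': "red y'" using red_tl y Cons by simp
    have y'l: "y' \<in> lists S" using red_lists[OF ry'] .
    define bu where "bu = ev y'"
    have buc: "bu \<in> carrier G" using y'l by (simp add: bu_def)
    have buW: "bu \<in> W I" using y'I unfolding W_def bu_def by auto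
    have u_eq: "u = b \<otimes> bu" using y Cons by (simp add: bu_def)
    have lenu: "len u = Suc (len bu)" using red_len[OF y(1)] red_len[OF ry'] y Cons by (simp add: bu_def)
    have "len (bu \<otimes> g0) = len bu + len g0" using len_add_left[OF I g0 mnl buW] .
    moreover have "len (u \<otimes> g0) = len u + len g0" using len_add_left[OF I g0 mnl less(2)] .
    moreover have e1: "b \<otimes> (u \<otimes> g0) = bu \<otimes> g0" using u_eq bc buc g0 by (simp add: m_assoc S_cancel[OF bS])
    ultimately have lt: "len (b \<otimes> (g0 \<otimes> v)) < len (g0 \<otimes> v)" using less(4) lenu by simp
    obtain zg where zg: "red zg" "ev zg = g0" using red_ex[OF g0] by auto
    obtain zv where zv: "red zv" "ev zv = v" "zv \<in> lists J" using W_red[OF J less(3)] by auto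
    have zgl: "zg \<in> lists S" using red_lists[OF zg(1)] .
    have zvl: "zv \<in> lists S" using red_lists[OF zv(1)] .
    have ez: "ev (zg @ zv) = g0 \<otimes> v" using zgl zvl zg zv by simp
    have rz: "red (zg @ zv)" using len_add_right[OF J g0 mnr less(3)] red_len zg zv zgl zvl
      by (intro red_append) auto
    obtain i where i: "i < length (zg @ zv)" "b \<otimes> (g0 \<otimes> v) = ev (del i (zg @ zv))"
      using exch[OF bS rz] lt ez by force
    show ?thesis
    proof (cases "i < length zg")
      case True
      have dl: "del i zg \<in> lists S" using del_lists[OF zgl] .
      have "b \<otimes> g0 \<otimes> v = ev (del i zg) \<otimes> v"
        using i(2) del_append1[OF True] dl zvl zv bc g0 vc by (simp add: m_assoc)
      then have "b \<otimes> g0 = ev (del i zg)" using bc g0 vc dl by simp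
      then have "len (b \<otimes> g0 \<otimes> \<one>) \<le> length (del i zg)" using len_le[OF dl] bc g0 dl by simp
      moreover have "len g0 \<le> len (b \<otimes> g0 \<otimes> \<one>)" using mn[OF W_gen[OF bI IC] W_one] .
      moreover have "length (del i zg) < length zg" using del_len[OF True] True by simp
      ultimately show ?thesis using red_len[OF zg(1)] zg by simp
    next
      case False
      define j where "j = i - length zg"
      have j: "j < length zv" using i False by (simp add: j_def)
      have dl: "del j zv \<in> lists S" using del_lists[OF zvl] .
      have dJ: "del j zv \<in> lists J" using del_set[of j zv] zv(3) by (auto simp: in_lists_conv_set)
      have dW: "ev (del j zv) \<in> W J" using dJ unfolding W_def by auto
      have dc: "ev (del j zv) \<in> carrier G" using dl by simp
      have e2: "b \<otimes> (g0 \<otimes> v) = g0 \<otimes> ev (del j zv)"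
        using i(2) del_append2[of zg i zv] False dl zgl zg by (simp add: j_def)
      define r where "r = ev (del j zv) \<otimes> inv v"
      have rW: "r \<in> W J" unfolding r_def using W_mult[OF JC dW W_inv[OF J less(3)]] .
      have rc: "r \<in> carrier G" using W_carr[OF JC rW] .
      have bg: "b \<otimes> g0 = g0 \<otimes> r"
      proof -
        have "b \<otimes> g0 = b \<otimes> (g0 \<otimes> v) \<otimes> inv v" using bc g0 vc by (simp add: m_assoc)
        also have "\<dots> = g0 \<otimes> r" using e2 g0 dc vc by (simp add: r_def m_assoc)
        finally show ?thesis .
      qed
      have "len (b \<otimes> g0) = len b + len g0" using len_add_left[OF I g0 mnl W_gen[OF bI IC]] .
      moreover have "len (g0 \<otimes> r) = len g0 + len r" using len_add_right[OF J g0 mnr rW] .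
      ultimately have "len r = 1" using bg len_S[OF bS] by simp
      then have rJ: "r \<in> J" using W_len1[OF J rW] by simp
      have "b = b \<otimes> g0 \<otimes> inv g0" using bc g0 by (simp add: m_assoc)
      then have "b = cj g0 r" using bg by (simp add: cj_def)
      then have bK: "b \<in> I \<inter> cj g0 ` J" using bI rJ by auto
      have "bu \<otimes> g0 = g0 \<otimes> (r \<otimes> v)"
      proof -
        have "bu \<otimes> g0 = b \<otimes> (g0 \<otimes> v)" using e1 less(4) by simp
        also have "\<dots> = b \<otimes> g0 \<otimes> v" using bc g0 vc by (simp add: m_assoc)
        also have "\<dots> = g0 \<otimes> (r \<otimes> v)" using bg g0 rc vc by (simp add: m_assoc)
        finally show ?thesis .
      qed
      moreover have "r \<otimes> v \<in> W J" using W_mult[OF JC rW less(3)] .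
      moreover have "len bu < len u" using lenu by simp
      ultimately have "bu \<in> W (I \<inter> cj g0 ` J)" using less(1) buW by blast
      moreover have KC: "I \<inter> cj g0 ` J \<subseteq> carrier G" using IC by auto
      ultimately show ?thesis using u_eq W_mult[OF KC W_gen[OF bK KC]] by simp
    qed
  qed
qed

end


context cox begin

lemma W_subsing: assumes K: "K \<subseteq> S" and one: "\<And>a b. a \<in> K \<Longrightarrow> b \<in> K \<Longrightarrow> a = b"
  and h: "h \<in> W K" and o: "odd (len h)" shows "h \<in> K"
proof -
  obtain x where x: "x \<in> lists K" "h = ev x" using h unfolding W_def by auto
  have "ev x \<in> insert \<one> K" using x(1)
  proof (induct x)
    case Nil then show ?case by simp
  next
    case (Cons a x)
    then have a: "a \<in> K" and IH: "ev x \<in> insert \<one> K" by auto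
    have ac: "a \<in> carrier G" using a K S_carr by auto
    from IH show ?case
    proof
      assume "ev x = \<one>" then show ?thesis using a ac by simp
    next
      assume "ev x \<in> K" then have "ev x = a" using one a by blast
      then show ?thesis using S_inv a K by auto
    qed
  qed
  then show ?thesis using o x by auto
qed

lemma para_unique:
  assumes S4: "s \<in> S" "t \<in> S" "s' \<in> S" "t' \<in> S" and ne: "s \<noteq> t" "s' \<noteq> t'"
    and q: "q \<in> carrier G" "q' \<in> carrier G"
    and rho: "\<rho>1 \<noteq> \<rho>2" "\<rho>1 \<in> cj q ` W {s, t}" "\<rho>2 \<in> cj q ` W {s, t}"
       "\<rho>1 \<in> cj q' ` W {s', t'}" "\<rho>2 \<in> cj q' ` W {s', t'}"
    and odd: "odd (len \<rho>1)" "odd (len \<rho>2)"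
  shows "cj q ` W {s, t} = cj q' ` W {s', t'}"
proof -
  define I where "I = {s, t}"
  define J where "J = {s', t'}"
  have I: "I \<subseteq> S" and J: "J \<subseteq> S" using S4 by (auto simp: I_def J_def)
  have IC: "I \<subseteq> carrier G" and JC: "J \<subseteq> carrier G" using I J S_carr by auto
  define g where "g = inv q \<otimes> q'"
  have gc: "g \<in> carrier G" using q by (simp add: g_def)
  define DC where "DC = {u \<otimes> g \<otimes> v | u v. u \<in> W I \<and> v \<in> W J}"
  have "\<one> \<otimes> g \<otimes> \<one> \<in> DC" unfolding DC_def using W_one by blast
  then have "g \<in> DC" using gc by simp
  then have ex: "\<exists>n. \<exists>h\<in>DC. len h = n" by blast
  define n where "n = (LEAST n. \<exists>h\<in>DC. len h = n)"
  have n: "\<exists>h\<in>DC. len h = n" "\<And>n'. (\<exists>h\<in>DC. len h = n') \<Longrightarrow> n \<le> n'"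
  proof -
    show "\<exists>h\<in>DC. len h = n" unfolding n_def by (rule LeastI_ex[OF ex])
  next
    fix n' assume "\<exists>h\<in>DC. len h = n'"
    then show "n \<le> n'" unfolding n_def by (rule Least_le)
  qed
  then obtain g0 where g0: "g0 \<in> DC" "len g0 = n" by blast
  obtain u1 v1 where uv1: "u1 \<in> W I" "v1 \<in> W J" "g0 = u1 \<otimes> g \<otimes> v1" using g0 unfolding DC_def by auto
  have u1c: "u1 \<in> carrier G" using W_carr[OF IC uv1(1)] .
  have v1c: "v1 \<in> carrier G" using W_carr[OF JC uv1(2)] .
  have g0c: "g0 \<in> carrier G" using uv1 u1c v1c gc by simp
  have mn: "len g0 \<le> len (u \<otimes> g0 \<otimes> v)" if u: "u \<in> W I" and v: "v \<in> W J" for u v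
  proof -
    have uc: "u \<in> carrier G" using W_carr[OF IC u] .
    have vc: "v \<in> carrier G" using W_carr[OF JC v] .
    have "u \<otimes> g0 \<otimes> v = (u \<otimes> u1) \<otimes> g \<otimes> (v1 \<otimes> v)" using uv1 uc vc u1c v1c gc by (simp add: m_assoc)
    moreover have "u \<otimes> u1 \<in> W I" using W_mult[OF IC u uv1(1)] .
    moreover have "v1 \<otimes> v \<in> W J" using W_mult[OF JC uv1(2) v] .
    ultimately have "u \<otimes> g0 \<otimes> v \<in> DC" unfolding DC_def by blast
    then show ?thesis using n(2) g0(2) by blast
  qed
  define K where "K = I \<inter> cj g0 ` J"
  have K: "K \<subseteq> S" using I by (auto simp: K_def)
  have tr: "cj u1 (cj (inv q) \<rho>) \<in> W K \<and> odd (len (cj u1 (cj (inv q) \<rho>)))"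
    if r1: "\<rho> \<in> cj q ` W I" and r2: "\<rho> \<in> cj q' ` W J" and o: "odd (len \<rho>)" for \<rho>
  proof -
    obtain a where a: "a \<in> W I" "\<rho> = cj q a" using r1 by auto
    obtain b where b: "b \<in> W J" "\<rho> = cj q' b" using r2 by auto
    have ac: "a \<in> carrier G" using W_carr[OF IC a(1)] .
    have bc: "b \<in> carrier G" using W_carr[OF JC b(1)] .
    have rc: "\<rho> \<in> carrier G" using a ac q by simp
    have e1: "cj (inv q) \<rho> = a" using a ac q by (simp add: cj_cj)
    have e2: "cj (inv q) \<rho> = cj g b" using b bc q by (simp add: cj_cj g_def)
    define w where "w = cj (inv v1) b"
    have wW: "w \<in> W J"
    proof -
      have "cj (inv v1) ` W J = W J" using W_cj_self[OF J W_inv[OF J uv1(2)]] .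
      then show ?thesis using b(1) unfolding w_def by blast
    qed
    have wc: "w \<in> carrier G" using W_carr[OF JC wW] .
    define \<tau> where "\<tau> = cj u1 (cj (inv q) \<rho>)"
    have tW: "\<tau> \<in> W I"
    proof -
      have "cj u1 ` W I = W I" using W_cj_self[OF I uv1(1)] .
      then show ?thesis using a(1) e1 unfolding \<tau>_def by blast
    qed
    have "\<tau> = cj u1 (cj g b)" using e2 by (simp add: \<tau>_def)
    also have "\<dots> = cj (u1 \<otimes> g \<otimes> v1) (cj (inv v1) b)" using u1c gc v1c bc by (simp add: cj_cj m_assoc)
    also have "\<dots> = cj g0 w" using uv1 by (simp add: w_def)
    finally have tg: "\<tau> = cj g0 w" .
    have "\<tau> \<otimes> g0 = g0 \<otimes> w" using tg g0c wc by (simp add: cj_def m_assoc)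
    then have "\<tau> \<in> W K" using kilmoyer[OF I J g0c mn tW wW] by (simp add: K_def)
    moreover have "odd (len \<tau>)" using o len_cj_parity rc q u1c by (simp add: \<tau>_def)
    ultimately show ?thesis by (simp add: \<tau>_def)
  qed
  have "\<exists>a\<in>K. \<exists>b\<in>K. a \<noteq> b"
  proof (rule ccontr)
    assume "\<not> ?thesis"
    then have one: "\<And>a b. a \<in> K \<Longrightarrow> b \<in> K \<Longrightarrow> a = b" by blast
    have "cj u1 (cj (inv q) \<rho>1) \<in> K" using tr[of \<rho>1] rho odd W_subsing[OF K one] by (simp add: I_def J_def)
    moreover have "cj u1 (cj (inv q) \<rho>2) \<in> K" using tr[of \<rho>2] rho odd W_subsing[OF K one] by (simp add: I_def J_def)
    ultimately have "cj u1 (cj (inv q) \<rho>1) = cj u1 (cj (inv q) \<rho>2)" using one by blast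
    moreover have "\<rho>1 \<in> carrier G" "\<rho>2 \<in> carrier G"
    proof -
      obtain a1 a2 where "a1 \<in> W I" "a2 \<in> W I" "\<rho>1 = cj q a1" "\<rho>2 = cj q a2" using rho(2,3) by (auto simp: I_def)
      then show "\<rho>1 \<in> carrier G" "\<rho>2 \<in> carrier G" using W_carr[OF IC] q by auto
    qed
    ultimately have "\<rho>1 = \<rho>2" using u1c q by (simp add: cj_inj)
    then show False using rho by simp
  qed
  then obtain a b where ab: "a \<in> K" "b \<in> K" "a \<noteq> b" by blast
  have "s \<in> cj g0 ` J" "t \<in> cj g0 ` J" using ab ne by (auto simp: K_def I_def)
  then have "{s, t} \<subseteq> {cj g0 s', cj g0 t'}" by (auto simp: J_def)
  then have JI: "cj g0 ` J = I" using ne by (auto simp: J_def I_def)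
  have WJ: "cj g0 ` W J = W I" using W_cj[OF JC g0c] JI by simp
  have eq1: "cj (inv v1) ` W J = W J" using W_cj_self[OF J W_inv[OF J uv1(2)]] .
  have eq2: "cj (inv u1) ` W I = W I" using W_cj_self[OF I W_inv[OF I uv1(1)]] .
  have ginv: "g = inv u1 \<otimes> g0 \<otimes> inv v1" using uv1 u1c v1c gc by (simp add: m_assoc cancel2)
  have "cj g ` W J = W I"
  proof -
    have "cj g ` W J = (\<lambda>h. cj (inv u1) (cj g0 (cj (inv v1) h))) ` W J"
    proof (rule image_cong[OF HOL.refl])
      fix h assume "h \<in> W J"
      then have "h \<in> carrier G" using W_carr[OF JC] by auto
      then show "cj g h = cj (inv u1) (cj g0 (cj (inv v1) h))" using ginv u1c v1c g0c by (simp add: cj_cj m_assoc)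
    qed
    also have "\<dots> = cj (inv u1) ` cj g0 ` cj (inv v1) ` W J" by (simp add: image_image)
    also have "\<dots> = W I" using eq1 WJ eq2 by simp
    finally show ?thesis .
  qed
  moreover have "cj q' ` W J = cj q ` cj g ` W J"
  proof -
    have "cj q' ` W J = (\<lambda>h. cj q (cj g h)) ` W J"
    proof (rule image_cong[OF HOL.refl])
      fix h assume "h \<in> W J"
      then have "h \<in> carrier G" using W_carr[OF JC] by auto
      then show "cj q' h = cj q (cj g h)" using q by (simp add: cj_cj g_def m_assoc[symmetric])
    qed
    then show ?thesis by (simp add: image_image)
  qed
  ultimately show ?thesis by (simp add: I_def J_def)
qed

end


lemma alt_rev_odd: "rev (alt_word a b (2*j+1)) = alt_word a b (2*j+1)"
proof (rule nth_equalityI)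
  fix i assume "i < length (rev (alt_word a b (2*j+1)))"
  then have i: "i < 2*j+1" by simp
  then have "even (2*j - i) = even i" by presburger
  then show "rev (alt_word a b (2*j+1)) ! i = alt_word a b (2*j+1) ! i"
    using i by (simp add: rev_nth alt_nth)
qed simp

lemma alt_rev: "rev (alt_word t s k) = (if even k then alt_word s t k else alt_word t s k)"
proof (rule nth_equalityI)
  fix i assume "i < length (rev (alt_word t s k))"
  then have i: "i < k" by simp
  then have "even (k - Suc i) = (even i = odd k)" by presburger
  then show "rev (alt_word t s k) ! i = (if even k then alt_word s t k else alt_word t s k) ! i"
    using i by (auto simp: rev_nth alt_nth)
qed simp

lemma alt_double: "alt_word s t k @ rev (alt_word t s k) = alt_word s t (2*k)"
proof -
  have "alt_word s t (k + k) = alt_word s t k @ (if even k then alt_word s t k else alt_word t s k)"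
    by (rule alt_add)
  then show ?thesis using alt_rev[of t s k] by (simp add: mult_2)
qed

context cox begin

lemma rel_one: assumes "a \<in> S" "b \<in> S" "m a b = enat k" shows "ev (alt_word a b (2*k)) = \<one>"
proof -
  have "(alt_word a b (2*k), []) \<in> cox_cong S m" using assms by (rule cox_cong.rel)
  then have "ev (alt_word a b (2*k)) = ev []" by (rule cong_eval)
  then show ?thesis by simp
qed

lemma braid: assumes "a \<in> S" "b \<in> S" "m a b = enat k" shows "ev (alt_word a b k) = ev (alt_word b a k)"
proof -
  have l1: "alt_word a b k \<in> lists S" "alt_word b a k \<in> lists S" using alt_lists[OF assms(1,2)] alt_lists[OF assms(2,1)] by auto
  have "ev (alt_word a b k) \<otimes> inv (ev (alt_word b a k)) = ev (alt_word a b k) \<otimes> ev (rev (alt_word b a k))"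
    using ev_rev[OF l1(2)] by simp
  also have "\<dots> = ev (alt_word a b k @ rev (alt_word b a k))" using l1(1) rev_lists[OF l1(2)] by simp
  also have "\<dots> = \<one>" using rel_one[OF assms] alt_double[of a b k] by simp
  finally have "ev (alt_word a b k) \<otimes> inv (ev (alt_word b a k)) = \<one>" .
  then show ?thesis using l1 by (metis ev_carr' inv_closed inv_inv inv_equality)
qed

lemma alt_odd_inv: assumes "a \<in> S" "b \<in> S" shows "inv (ev (alt_word a b (2*j+1))) = ev (alt_word a b (2*j+1))"
  using ev_rev[OF alt_lists[OF assms]] alt_rev_odd by metis

lemma periodic: assumes "a \<in> S" "b \<in> S" "m a b = enat k"
  shows "ev (alt_word a b (2*(i + k*c)+1)) = ev (alt_word a b (2*i+1))"
proof (induct c)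
  case 0 then show ?case by simp
next
  case (Suc c)
  have "alt_word a b (2*k + (2*(i + k*c)+1)) = alt_word a b (2*k) @ alt_word a b (2*(i + k*c)+1)"
    by (subst alt_add) simp
  moreover have "2*(i + k*Suc c)+1 = 2*k + (2*(i + k*c)+1)" by (simp add: algebra_simps)
  ultimately have "alt_word a b (2*(i + k*Suc c)+1) = alt_word a b (2*k) @ alt_word a b (2*(i + k*c)+1)" by (simp only:)
  then have "ev (alt_word a b (2*(i + k*Suc c)+1)) = ev (alt_word a b (2*k)) \<otimes> ev (alt_word a b (2*(i + k*c)+1))"
    using alt_lists[OF assms(1,2)] by simp
  then show ?case using Suc rel_one[OF assms] alt_lists[OF assms(1,2)] by simp
qed

lemma periodic_mod: assumes "a \<in> S" "b \<in> S" "m a b = enat k"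
  shows "ev (alt_word a b (2*i+1)) = ev (alt_word a b (2*(i mod k)+1))"
  using periodic[OF assms, of "i mod k" "i div k"] by (simp add: mult.commute)

lemma flip_odd: assumes "s \<in> S" "t \<in> S" "m s t = enat k" "i < k"
  shows "ev (alt_word t s (2*i+1)) = ev (alt_word s t (2*(k - 1 - i)+1))"
proof -
  have n: "2*(k - 1 - i)+1 + (2*i+1) = 2*k" using assms by simp
  have "alt_word s t (2*(k - 1 - i)+1 + (2*i+1)) = alt_word s t (2*(k - 1 - i)+1) @ alt_word t s (2*i+1)"
    by (subst alt_add) simp
  then have "alt_word s t (2*k) = alt_word s t (2*(k - 1 - i)+1) @ alt_word t s (2*i+1)" using n by (simp only:)
  then have "ev (alt_word s t (2*(k - 1 - i)+1)) \<otimes> ev (alt_word t s (2*i+1)) = \<one>"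
    using rel_one[OF assms(1-3)] alt_lists[OF assms(1,2)] alt_lists[OF assms(2,1)] by simp
  then have "ev (alt_word t s (2*i+1)) = inv (ev (alt_word s t (2*(k - 1 - i)+1)))"
    using alt_lists assms by (metis ev_carr' inv_equality inv_inv inv_closed)
  then show ?thesis using alt_odd_inv assms by simp
qed

lemma RL_alt_rev: assumes "s \<in> S" "t \<in> S" "s \<noteq> t" "m s t = enat k"
  shows "RL (alt_word t s k) = rev (RL (alt_word s t k))"
proof -
  have mts: "m t s = enat k" using m_sym assms by simp
  show ?thesis
  proof (rule nth_equalityI)
    fix i assume "i < length (RL (alt_word t s k))"
    then have i: "i < k" by simp
    have "RL (alt_word t s k) ! i = ev (alt_word t s (2*i+1))" using RL_alt[of t s k] assms i by simp
    also have "\<dots> = ev (alt_word s t (2*(k - 1 - i)+1))" using flip_odd[OF assms(1,2,4) i] .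
    also have "\<dots> = rev (RL (alt_word s t k)) ! i" using RL_alt[of s t k] assms i by (simp add: rev_nth)
    finally show "RL (alt_word t s k) ! i = rev (RL (alt_word s t k)) ! i" .
  qed simp
qed

lemma alt_step: assumes cd: "c \<in> S" "d \<in> S" and a: "a = c \<or> a = d" and x: "ev x = ev (alt_word c d j)"
  shows "\<exists>j'. (ev (a # x) = ev (alt_word c d j') \<or> ev (a # x) = ev (alt_word d c j')) \<and> even j' \<noteq> even j"
proof (cases "a = c")
  case True
  show ?thesis
  proof (cases j)
    case 0
    have "ev (a # x) = ev (alt_word c d 1)" using True x 0 cd S_carr by (auto simp: alt_Suc)
    then show ?thesis using 0 by (intro exI[of _ 1]) auto
  next
    case (Suc j')
    have "ev (a # x) = c \<otimes> (c \<otimes> ev (alt_word d c j'))" using True x Suc by (simp add: alt_Suc)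
    also have "\<dots> = ev (alt_word d c j')" using S_cancel[OF cd(1)] alt_lists[OF cd(2,1)] by simp
    finally show ?thesis using Suc by (intro exI[of _ j']) auto
  qed
next
  case False
  then have "a = d" using a by auto
  then have "ev (a # x) = ev (alt_word d c (Suc j))" using x by (simp add: alt_Suc)
  then show ?thesis by (intro exI[of _ "Suc j"]) auto
qed

lemma alt_word_reduce: assumes "p \<in> S" "q \<in> S" "x \<in> lists {p, q}"
  shows "\<exists>j. (ev x = ev (alt_word p q j) \<or> ev x = ev (alt_word q p j)) \<and> even j = even (length x)"
  using assms(3)
proof (induct x)
  case Nil then show ?case by (intro exI[of _ 0]) simp
next
  case (Cons a x)
  then obtain j where j: "ev x = ev (alt_word p q j) \<or> ev x = ev (alt_word q p j)" "even j = even (length x)"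
    by auto
  have a: "a = p \<or> a = q" using Cons by auto
  from j(1) show ?case
  proof
    assume h: "ev x = ev (alt_word p q j)"
    obtain j' where "(ev (a # x) = ev (alt_word p q j') \<or> ev (a # x) = ev (alt_word q p j'))" "even j' \<noteq> even j"
      using alt_step[OF assms(1,2) a h] by blast
    then show ?thesis using j(2) by (intro exI[of _ j']) auto
  next
    assume h: "ev x = ev (alt_word q p j)"
    obtain j' where "(ev (a # x) = ev (alt_word q p j') \<or> ev (a # x) = ev (alt_word p q j'))" "even j' \<noteq> even j"
      using alt_step[OF assms(2,1) _ h] a by blast
    then show ?thesis using j(2) by (intro exI[of _ j']) auto
  qed
qed

end


context cox begin

definition oddD :: "'a \<Rightarrow> 'a \<Rightarrow> 'a set" where "oddD a b = {h \<in> W {a, b}. odd (len h)}"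

lemma oddW_alt: assumes st: "s \<in> S" "t \<in> S" "s \<noteq> t" and k: "m s t = enat k"
  shows "set (RL (alt_word s t k)) = oddD s t"
proof
  show "set (RL (alt_word s t k)) \<subseteq> oddD s t"
  proof
    fix h assume "h \<in> set (RL (alt_word s t k))"
    then obtain i where i: "i < k" "h = ev (alt_word s t (2*i+1))" using RL_alt[OF st(1,2)] by auto
    have "alt_word s t (2*i+1) \<in> lists {s, t}" using alt_set[of s t "2*i+1"] by (auto simp: in_lists_conv_set)
    then have "h \<in> W {s, t}" using i unfolding W_def by auto
    moreover have "odd (len h)" using len_parity[OF alt_lists[OF st(1,2)]] i by simp
    ultimately show "h \<in> oddD s t" by (simp add: oddD_def)
  qed
next
  show "oddD s t \<subseteq> set (RL (alt_word s t k))"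
  proof
    fix h assume "h \<in> oddD s t"
    then obtain x where x: "x \<in> lists {s, t}" "h = ev x" "odd (len h)" unfolding oddD_def W_def by auto
    have "{s, t} \<subseteq> S" using st by simp
    then have xl: "x \<in> lists S" using x(1) lists_mono by blast
    have ox: "odd (length x)" using len_parity[OF xl] x by simp
    obtain j where j: "ev x = ev (alt_word s t j) \<or> ev x = ev (alt_word t s j)" "even j = even (length x)"
      using alt_word_reduce[OF st(1,2) x(1)] by auto
    have "odd j" using j(2) ox by simp
    then obtain i where ij: "j = 2*i+1" by (rule oddE)
    have "enat 2 \<le> enat k" using m_ge2[OF st] k by (simp add: numeral_eq_enat)
    then have k0: "0 < k" by simp
    have im: "i mod k < k" using k0 by simp
    have mk: "m t s = enat k" using m_sym[OF st] k by simp
    have rl: "RL (alt_word s t k) = map (\<lambda>i. ev (alt_word s t (2*i+1))) [0..<k]" using RL_alt[OF st(1,2)] .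
    from j(1) show "h \<in> set (RL (alt_word s t k))"
    proof
      assume "ev x = ev (alt_word s t j)"
      then have "h = ev (alt_word s t (2*(i mod k)+1))" using x ij periodic_mod[OF st(1,2) k] by simp
      moreover have "ev (alt_word s t (2*(i mod k)+1)) \<in> set (map (\<lambda>i. ev (alt_word s t (2*i+1))) [0..<k])"
        using im by (simp only: set_map set_upt) (rule imageI, simp)
      ultimately show ?thesis using rl by simp
    next
      assume "ev x = ev (alt_word t s j)"
      then have "h = ev (alt_word t s (2*(i mod k)+1))" using x ij periodic_mod[OF st(2,1) mk] by simp
      also have "\<dots> = ev (alt_word s t (2*(k - 1 - i mod k)+1))" using flip_odd[OF st(1,2) k im] .
      moreover have "ev (alt_word s t (2*(k - 1 - i mod k)+1)) \<in> set (map (\<lambda>i. ev (alt_word s t (2*i+1))) [0..<k])"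
        using k0 by (simp only: set_map set_upt) (rule imageI, simp)
      ultimately show ?thesis using rl by simp
    qed
  qed
qed

lemma cj_oddD: assumes q: "q \<in> carrier G" and st: "s \<in> S" "t \<in> S"
  shows "cj q ` oddD s t = oddD (cj q s) (cj q t)"
proof -
  have I: "{s, t} \<subseteq> carrier G" using st S_carr by auto
  have WW: "cj q ` W {s, t} = W {cj q s, cj q t}" using W_cj[OF I q] by simp
  have par: "odd (len (cj q h)) = odd (len h)" if "h \<in> W {s, t}" for h
    using len_cj_parity[OF q W_carr[OF I that]] by simp
  show ?thesis
  proof
    show "cj q ` oddD s t \<subseteq> oddD (cj q s) (cj q t)" using WW par unfolding oddD_def by auto
  next
    show "oddD (cj q s) (cj q t) \<subseteq> cj q ` oddD s t"
    proof
      fix h assume "h \<in> oddD (cj q s) (cj q t)"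
      then have h: "h \<in> cj q ` W {s, t}" "odd (len h)" using WW unfolding oddD_def by auto
      then obtain a where "a \<in> W {s, t}" "h = cj q a" by auto
      then show "h \<in> cj q ` oddD s t" using h par unfolding oddD_def by auto
    qed
  qed
qed

definition para :: "'a \<Rightarrow> 'a \<Rightarrow> bool" where
  "para a b \<longleftrightarrow> (\<exists>q\<in>carrier G. \<exists>s\<in>S. \<exists>t\<in>S. s \<noteq> t \<and> a = cj q s \<and> b = cj q t)"

lemma para_swap: assumes "para a b" shows "para b a"
proof -
  obtain q s t where qst: "q \<in> carrier G" "s \<in> S" "t \<in> S" "s \<noteq> t" "a = cj q s" "b = cj q t"
    using assms unfolding para_def by blast
  show ?thesis unfolding para_def using qst by (intro bexI[OF _ qst(1)] bexI[OF _ qst(3)] bexI[OF _ qst(2)]) auto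
qed

lemma para_props: assumes "para a b" shows "a \<noteq> b" "a \<in> oddD a b" "b \<in> oddD a b"
proof -
  obtain q s t where qst: "q \<in> carrier G" "s \<in> S" "t \<in> S" "s \<noteq> t" "a = cj q s" "b = cj q t"
    using assms unfolding para_def by blast
  have sc: "s \<in> carrier G" "t \<in> carrier G" using qst S_carr by auto
  show "a \<noteq> b" using qst(4-6) cj_inj[OF qst(1) sc] by simp
  have ab: "{a, b} \<subseteq> carrier G" using qst sc by simp
  have "a \<in> W {a, b}" by (rule W_gen[OF _ ab]) simp
  moreover have "b \<in> W {a, b}" by (rule W_gen[OF _ ab]) simp
  moreover have "odd (len a)" using len_cj_parity[OF qst(1) sc(1)] qst(5) len_S[OF qst(2)] by simp
  moreover have "odd (len b)" using len_cj_parity[OF qst(1) sc(2)] qst(6) len_S[OF qst(3)] by simp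
  ultimately show "a \<in> oddD a b" "b \<in> oddD a b" unfolding oddD_def by auto
qed

lemma oddD_sym: "oddD a b = oddD b a" unfolding oddD_def by (simp add: insert_commute)

lemma para_unique': assumes "para a b" "para c d" "r1 \<noteq> r2" "r1 \<in> oddD a b" "r2 \<in> oddD a b"
  "r1 \<in> oddD c d" "r2 \<in> oddD c d" shows "oddD a b = oddD c d"
proof -
  obtain q s t where qst: "q \<in> carrier G" "s \<in> S" "t \<in> S" "s \<noteq> t" "a = cj q s" "b = cj q t"
    using assms unfolding para_def by blast
  obtain q' s' t' where qst': "q' \<in> carrier G" "s' \<in> S" "t' \<in> S" "s' \<noteq> t'" "c = cj q' s'" "d = cj q' t'"
    using assms unfolding para_def by blast
  have I: "{s, t} \<subseteq> carrier G" "{s', t'} \<subseteq> carrier G" using qst qst' S_carr by auto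
  have W1: "W {a, b} = cj q ` W {s, t}" using W_cj[OF I(1) qst(1)] qst by simp
  have W2: "W {c, d} = cj q' ` W {s', t'}" using W_cj[OF I(2) qst'(1)] qst' by simp
  have r: "r1 \<in> W {a, b}" "r2 \<in> W {a, b}" "r1 \<in> W {c, d}" "r2 \<in> W {c, d}" "odd (len r1)" "odd (len r2)"
    using assms(4-7) unfolding oddD_def by auto
  have "cj q ` W {s, t} = cj q' ` W {s', t'}"
    using para_unique[OF qst(2,3) qst'(2,3) qst(4) qst'(4) qst(1) qst'(1) assms(3)] r W1 W2 by simp
  then show ?thesis using W1 W2 unfolding oddD_def by simp
qed

end


lemma list_ends: assumes "2 \<le> length L" shows "(\<exists>mid. L = a # mid @ [b]) \<longleftrightarrow> hd L = a \<and> last L = b"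
proof
  assume "\<exists>mid. L = a # mid @ [b]"
  then obtain mid where "L = a # mid @ [b]" by blast
  then show "hd L = a \<and> last L = b" by simp
next
  assume h: "hd L = a \<and> last L = b"
  obtain c L' where L: "L = c # L'" using assms by (cases L) auto
  then have "L' \<noteq> []" using assms by auto
  then have "L' = butlast L' @ [last L']" by simp
  moreover have "c = a" using h L by simp
  moreover have "last L' = b" using h L \<open>L' \<noteq> []\<close> by simp
  ultimately have "L = a # butlast L' @ [b]" using L by simp
  then show "\<exists>mid. L = a # mid @ [b]" by blast
qed

lemma distinct_le1: assumes "distinct L" "\<And>x y. x \<in> set L \<Longrightarrow> y \<in> set L \<Longrightarrow> x = y" shows "length L \<le> 1"
proof (cases L)
  case (Cons x L')
  show ?thesis
  proof (cases L')
    case (Cons y L'')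
    have "x \<noteq> y" using assms(1) \<open>L = x # L'\<close> Cons by simp
    moreover have "x = y" using assms(2)[of x y] \<open>L = x # L'\<close> Cons by simp
    ultimately show ?thesis by simp
  qed (simp add: \<open>L = x # L'\<close>)
qed simp

context cox begin

definition ep :: "('a list \<times> ('a \<times> 'a) \<times> 'a list) \<Rightarrow> 'a \<times> 'a" where
  "ep e = (case e of (x, (s, t), y) \<Rightarrow> (SOME pr. \<exists>k u v. m s t = enat k \<and> x = u @ alt_word s t k @ v
      \<and> y = u @ alt_word t s k @ v \<and> pr = (cj (ev u) s, cj (ev u) t)))"

lemma red_expr: assumes "reduced_expr G S w x" shows "red x" "ev x = w"
proof -
  have x: "x \<in> lists S" "ev x = w" "\<forall>ys\<in>lists S. ev ys = w \<longrightarrow> length x \<le> length ys"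
    using assms unfolding reduced_expr_def by auto
  have "ev x \<in> carrier G" using x(1) by simp
  then obtain y where "y \<in> lists S" "ev y = ev x" "length y = len (ev x)" using len_ex[of "ev x"] by auto
  then have "length x \<le> len (ev x)" using x by auto
  then show "red x" using len_le[OF x(1)] x(1) by (simp add: red_def)
  show "ev x = w" using x by simp
qed

lemma arc_dec: assumes "(x, (s, t), y) \<in> R_arcs G S m w"
  shows "\<exists>k u v. m s t = enat k \<and> x = u @ alt_word s t k @ v \<and> y = u @ alt_word t s k @ v
    \<and> ep (x, (s, t), y) = (cj (ev u) s, cj (ev u) t)"
    "s \<in> S" "t \<in> S" "s \<noteq> t" "red x" "red y" "ev x = w" "ev y = w"
proof -
  have a: "(s, t) \<in> braid_pairs S m" "reduced_expr G S w x" "reduced_expr G S w y" "braid_move m (s, t) x y"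
    using assms unfolding R_arcs_def by auto
  show "s \<in> S" "t \<in> S" "s \<noteq> t" using a(1) unfolding braid_pairs_def by auto
  show "red x" "ev x = w" using red_expr[OF a(2)] by auto
  show "red y" "ev y = w" using red_expr[OF a(3)] by auto
  obtain k u v where kuv: "m s t = enat k" "x = u @ alt_word s t k @ v" "y = u @ alt_word t s k @ v"
    using a(4) unfolding braid_move_def by auto
  have "\<exists>pr. \<exists>k u v. m s t = enat k \<and> x = u @ alt_word s t k @ v
      \<and> y = u @ alt_word t s k @ v \<and> pr = (cj (ev u) s, cj (ev u) t)"
    using kuv by blast
  from someI_ex[OF this] show "\<exists>k u v. m s t = enat k \<and> x = u @ alt_word s t k @ v \<and> y = u @ alt_word t s k @ v
    \<and> ep (x, (s, t), y) = (cj (ev u) s, cj (ev u) t)" unfolding ep_def by simp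
qed

lemma arc_para: assumes "(x, (s, t), y) \<in> R_arcs G S m w" shows "para (fst (ep (x, (s, t), y))) (snd (ep (x, (s, t), y)))"
proof -
  obtain k u v where d: "m s t = enat k" "x = u @ alt_word s t k @ v" "ep (x, (s, t), y) = (cj (ev u) s, cj (ev u) t)"
    using arc_dec[OF assms] by blast
  have "x \<in> lists S" using arc_dec(5)[OF assms] red_lists by blast
  then have "u \<in> lists S" using d by simp
  then have qc: "ev u \<in> carrier G" by simp
  have "para (cj (ev u) s) (cj (ev u) t)" unfolding para_def using qc arc_dec(2-4)[OF assms] by blast
  then show ?thesis using d(3) by simp
qed

definition K :: "'a list \<Rightarrow> 'a \<Rightarrow> 'a \<Rightarrow> bool" where
  "K x a b \<longleftrightarrow> a \<noteq> b \<and> (\<exists>mid. filter (\<lambda>r. r \<in> oddD a b) (RL x) = a # mid @ [b])"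

lemma flip: assumes e: "(x, (s, t), y) \<in> R_arcs G S m w" and p: "para a b"
  shows "(K x a b \<and> \<not> K y a b \<longleftrightarrow> ep (x, (s, t), y) = (a, b)) \<and> (\<not> K x a b \<and> K y a b \<longleftrightarrow> ep (x, (s, t), y) = (b, a))"
proof -
  obtain k u v where d: "m s t = enat k" "x = u @ alt_word s t k @ v" "y = u @ alt_word t s k @ v"
    "ep (x, (s, t), y) = (cj (ev u) s, cj (ev u) t)"
    using arc_dec[OF e] by blast
  have st: "s \<in> S" "t \<in> S" "s \<noteq> t" using arc_dec[OF e] by auto
  have rx: "red x" using arc_dec[OF e] by auto
  have xl: "x \<in> lists S" using red_lists[OF rx] .
  have ul: "u \<in> lists S" and vl: "v \<in> lists S" using xl d(2) by simp_all
  have Al: "alt_word s t k \<in> lists S" using alt_lists[OF st(1,2)] .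
  have A'l: "alt_word t s k \<in> lists S" using alt_lists[OF st(2,1)] .
  define q where "q = ev u"
  have qc: "q \<in> carrier G" using ul by (simp add: q_def)
  define c where "c = cj q s"
  define dd where "dd = cj q t"
  have ep: "ep (x, (s, t), y) = (c, dd)" using d(4) by (simp add: c_def dd_def q_def)
  have pcd: "para c dd" unfolding para_def c_def dd_def using qc st by blast
  define Bl where "Bl = map (cj q) (RL (alt_word s t k))"
  define Rest where "Rest = map (cj q) (map (cj (ev (alt_word s t k))) (RL v))"
  have RLx: "RL x = RL u @ Bl @ Rest"
    using d(2) ul vl Al by (simp add: RL_append Bl_def Rest_def q_def)
  have br: "ev (alt_word t s k) = ev (alt_word s t k)" using braid[OF st(1,2) d(1)] by simp
  have RLy: "RL y = RL u @ rev Bl @ Rest"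
    using d(3) ul vl A'l br RL_alt_rev[OF st d(1)] by (simp add: RL_append Bl_def Rest_def q_def rev_map)
  have setBl: "set Bl = oddD c dd"
    using oddW_alt[OF st d(1)] cj_oddD[OF qc st(1,2)] by (simp add: Bl_def c_def dd_def)
  have dx: "distinct (RL x)" using RL_distinct[OF rx] .
  have k2: "2 \<le> k"
  proof -
    have "enat 2 \<le> enat k" using m_ge2[OF st] d(1) by (simp add: numeral_eq_enat)
    then show ?thesis by simp
  qed
  have lenBl: "2 \<le> length Bl" using k2 by (simp add: Bl_def)
  have rlA: "RL (alt_word s t k) = map (\<lambda>i. ev (alt_word s t (2*i+1))) [0..<k]" using RL_alt[OF st(1,2)] .
  have sc: "s \<in> carrier G" "t \<in> carrier G" using st S_carr by auto
  have hdBl: "hd Bl = c"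
  proof -
    have "Bl \<noteq> []" using lenBl by auto
    then have "hd Bl = Bl ! 0" by (rule hd_conv_nth)
    also have "\<dots> = cj q (ev (alt_word s t 1))" using k2 by (simp add: Bl_def rlA)
    also have "\<dots> = c" using sc by (simp add: c_def alt_word_def)
    finally show ?thesis .
  qed
  have lastBl: "last Bl = dd"
  proof -
    have "Bl \<noteq> []" using lenBl by auto
    then have "last Bl = Bl ! (length Bl - 1)" by (rule last_conv_nth)
    then have "last Bl = Bl ! (k - 1)" by (simp add: Bl_def)
    also have "\<dots> = cj q (ev (alt_word s t (2*(k - 1 - 0)+1)))" using k2 by (simp add: Bl_def rlA)
    also have "\<dots> = cj q (ev (alt_word t s (2*0+1)))" using flip_odd[OF st(1,2) d(1), of 0] k2 by simp
    also have "\<dots> = dd" using sc by (simp add: dd_def alt_word_def)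
    finally show ?thesis .
  qed
  define R where "R = oddD a b"
  have ab: "a \<noteq> b" "a \<in> R" "b \<in> R" using para_props[OF p] by (auto simp: R_def)
  have cd: "c \<noteq> dd" "c \<in> set Bl" "dd \<in> set Bl" using para_props[OF pcd] setBl by auto
  have dx': "distinct (RL u @ Bl @ Rest)" using dx RLx by simp
  have dj: "set (RL u) \<inter> set Bl = {}" "set Rest \<inter> set Bl = {}" "distinct Bl"
    using dx' by (simp_all add: Int_commute Int_Un_distrib)
  show ?thesis
  proof (cases "\<exists>r1 r2. r1 \<noteq> r2 \<and> r1 \<in> R \<and> r2 \<in> R \<and> r1 \<in> set Bl \<and> r2 \<in> set Bl")
    case True
    then obtain r1 r2 where r: "r1 \<noteq> r2" "r1 \<in> R" "r2 \<in> R" "r1 \<in> set Bl" "r2 \<in> set Bl" by blast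
    have RB: "R = set Bl" using para_unique'[OF p pcd r(1)] r setBl by (simp add: R_def)
    have f1: "filter (\<lambda>r. r \<in> R) (RL u) = []" using dj(1) RB by (auto simp: filter_empty_conv)
    have f2: "filter (\<lambda>r. r \<in> R) Rest = []" using dj(2) RB by (auto simp: filter_empty_conv)
    have fx: "filter (\<lambda>r. r \<in> R) (RL x) = Bl" using RLx f1 f2 RB by simp
    have fy: "filter (\<lambda>r. r \<in> R) (RL y) = rev Bl" using RLy f1 f2 RB by simp
    have Kx: "K x a b \<longleftrightarrow> c = a \<and> dd = b"
      using fx list_ends[OF lenBl] hdBl lastBl ab(1) unfolding K_def R_def[symmetric] by auto
    have Ky: "K y a b \<longleftrightarrow> dd = a \<and> c = b"
    proof -
      have "2 \<le> length (rev Bl)" using lenBl by simp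
      moreover have "hd (rev Bl) = dd" "last (rev Bl) = c" using hdBl lastBl lenBl
        by (auto simp: hd_rev last_rev)
      ultimately show ?thesis using fy list_ends[of "rev Bl"] ab(1) unfolding K_def R_def[symmetric] by auto
    qed
    show ?thesis using Kx Ky ep ab(1) by auto
  next
    case False
    have "length (filter (\<lambda>r. r \<in> R) Bl) \<le> 1"
    proof (rule distinct_le1)
      show "distinct (filter (\<lambda>r. r \<in> R) Bl)" using dj(3) by simp
    next
      fix x1 y1 assume "x1 \<in> set (filter (\<lambda>r. r \<in> R) Bl)" "y1 \<in> set (filter (\<lambda>r. r \<in> R) Bl)"
      then show "x1 = y1" using False by auto
    qed
    then have "rev (filter (\<lambda>r. r \<in> R) Bl) = filter (\<lambda>r. r \<in> R) Bl"
      by (cases "filter (\<lambda>r. r \<in> R) Bl") auto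
    then have "filter (\<lambda>r. r \<in> R) (RL x) = filter (\<lambda>r. r \<in> R) (RL y)"
      using RLx RLy by (simp add: rev_filter)
    then have KK: "K x a b = K y a b" unfolding K_def R_def by simp
    have n1: "(c, dd) \<noteq> (a, b)" using False cd ab by blast
    have n2: "(c, dd) \<noteq> (b, a)" using False cd ab by blast
    show ?thesis using KK n1 n2 ep by simp
  qed
qed

end


lemma card_sum_bool: "card {i. i < (n::nat) \<and> P i} = (\<Sum>i<n. if P i then 1 else 0 :: nat)"
proof (induct n)
  case 0 then show ?case by simp
next
  case (Suc n)
  have "{i. i < Suc n \<and> P i} = {i. i < n \<and> P i} \<union> (if P n then {n} else {})"
    by (auto simp: less_Suc_eq)
  moreover have "finite {i. i < n \<and> P i}" by simp
  moreover have "n \<notin> {i. i < n \<and> P i}" by simp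
  ultimately show ?case using Suc by (cases "P n") simp_all
qed

lemma sum_rot: "(\<Sum>i<Suc n. h (Suc i mod Suc n)) = (\<Sum>i<Suc n. h i :: nat)"
proof -
  have "(\<Sum>i<Suc n. h (Suc i mod Suc n)) = (\<Sum>i<n. h (Suc i mod Suc n)) + h (Suc n mod Suc n)"
    by (rule sum.lessThan_Suc)
  also have "(\<Sum>i<n. h (Suc i mod Suc n)) = (\<Sum>i<n. h (Suc i))" by (rule sum.cong) auto
  also have "(\<Sum>i<Suc n. h i) = h 0 + (\<Sum>i<n. h (Suc i))" by (rule sum.lessThan_Suc_shift)
  ultimately show ?thesis by simp
qed

lemma cyclic: assumes "0 < n"
  shows "card {i. i < n \<and> f i \<and> \<not> f (Suc i mod n)} = card {i. i < n \<and> \<not> f i \<and> f (Suc i mod n)}"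
proof -
  obtain n' where n: "n = Suc n'" using assms by (cases n) auto
  define g where "g i = f (Suc i mod n)" for i
  have e1: "(\<Sum>i<n. if f i \<and> \<not> g i then 1 else 0) + (\<Sum>i<n. if f i \<and> g i then 1 else 0) = (\<Sum>i<n. if f i then 1 else (0::nat))"
    by (simp add: sum.distrib[symmetric]) (rule sum.cong, auto)
  have e2: "(\<Sum>i<n. if \<not> f i \<and> g i then 1 else 0) + (\<Sum>i<n. if f i \<and> g i then 1 else 0) = (\<Sum>i<n. if g i then 1 else (0::nat))"
    by (simp add: sum.distrib[symmetric]) (rule sum.cong, auto)
  have e3: "(\<Sum>i<n. if g i then 1 else (0::nat)) = (\<Sum>i<n. if f i then 1 else 0)"
    unfolding g_def n using sum_rot[of "\<lambda>i. if f i then 1 else 0" n'] by simp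
  show ?thesis unfolding card_sum_bool using e1 e2 e3 by (simp add: g_def)
qed

lemma filter_sum: assumes "finite U" "f ` set L \<subseteq> U"
  shows "length (filter (\<lambda>e. Q (f e)) L) = (\<Sum>p\<in>{p\<in>U. Q p}. length (filter (\<lambda>e. f e = p) L))"
  using assms(2)
proof (induct L)
  case Nil then show ?case by simp
next
  case (Cons a L)
  have fin: "finite {p\<in>U. Q p}" using assms(1) by simp
  have IH: "length (filter (\<lambda>e. Q (f e)) L) = (\<Sum>p\<in>{p\<in>U. Q p}. length (filter (\<lambda>e. f e = p) L))"
    using Cons by simp
  have "(\<Sum>p\<in>{p\<in>U. Q p}. length (filter (\<lambda>e. f e = p) (a # L)))
      = (\<Sum>p\<in>{p\<in>U. Q p}. (if f a = p then 1 else 0) + length (filter (\<lambda>e. f e = p) L))"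
    by (rule sum.cong) auto
  also have "\<dots> = (\<Sum>p\<in>{p\<in>U. Q p}. if f a = p then 1 else 0) + (\<Sum>p\<in>{p\<in>U. Q p}. length (filter (\<lambda>e. f e = p) L))"
    by (rule sum.distrib)
  also have "(\<Sum>p\<in>{p\<in>U. Q p}. if f a = p then 1 else 0) = (if Q (f a) then 1 else (0::nat))"
    using sum.delta[OF fin, of "f a" "\<lambda>_. 1::nat"] Cons(2) by (auto simp: eq_commute)
  finally show ?case using IH by simp
qed

lemma even_sym_sum: "finite X \<Longrightarrow> (\<forall>p\<in>X. prod.swap p \<in> X) \<Longrightarrow> (\<And>p. f (prod.swap p) = f p) \<Longrightarrow>
   (\<And>a. f (a, a) = (0::nat)) \<Longrightarrow> even (sum f X)"
proof (induct "card X" arbitrary: X rule: less_induct)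
  case less
  show ?case
  proof (cases "X = {}")
    case True then show ?thesis by simp
  next
    case False
    then obtain p where p: "p \<in> X" by blast
    obtain a b where ab: "p = (a, b)" by (cases p)
    show ?thesis
    proof (cases "a = b")
      case True
      have "sum f X = f p + sum f (X - {p})" using sum.remove[OF less(2) p] .
      moreover have "f p = 0" using less(5) ab True by simp
      moreover have "even (sum f (X - {p}))"
      proof (rule less(1))
        show "card (X - {p}) < card X" by (rule card_Diff1_less[OF less(2) p])
        show "finite (X - {p})" using less(2) by simp
        show "\<forall>q\<in>X - {p}. prod.swap q \<in> X - {p}" using less(3) ab True by auto
      qed (use less in auto)
      ultimately show ?thesis by simp
    next
      case False
      have sp: "prod.swap p \<in> X" using less(3) p by auto
      have ne: "prod.swap p \<noteq> p" using ab False by simp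
      have "sum f X = f p + sum f (X - {p})" using sum.remove[OF less(2) p] .
      moreover have "sum f (X - {p}) = f (prod.swap p) + sum f (X - {p} - {prod.swap p})"
        using sum.remove[of "X - {p}" "prod.swap p" f] less(2) sp ne by simp
      moreover have "even (sum f (X - {p} - {prod.swap p}))"
      proof (rule less(1))
        have "card (X - {p} - {prod.swap p}) < card (X - {p})"
          using less(2) sp ne by (intro card_Diff1_less) auto
        moreover have "card (X - {p}) < card X" by (rule card_Diff1_less[OF less(2) p])
        ultimately show "card (X - {p} - {prod.swap p}) < card X" by simp
        show "finite (X - {p} - {prod.swap p})" using less(2) by simp
        show "\<forall>q\<in>X - {p} - {prod.swap p}. prod.swap q \<in> X - {p} - {prod.swap p}"
        proof
          fix q assume q: "q \<in> X - {p} - {prod.swap p}"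
          then have "prod.swap q \<in> X" using less(3) by auto
          moreover have "prod.swap q \<noteq> p" using q by (cases q, cases p) auto
          moreover have "prod.swap q \<noteq> prod.swap p" using q by (cases q, cases p) auto
          ultimately show "prod.swap q \<in> X - {p} - {prod.swap p}" by simp
        qed
      qed (use less in auto)
      moreover have "f (prod.swap p) = f p" using less(4) .
      ultimately show ?thesis by simp
    qed
  qed
qed


context cox begin

lemma count_sym: assumes dc: "directed_cycle (R_arcs G S m w) C"
  shows "length (filter (\<lambda>e. ep e = (a, b)) C) = length (filter (\<lambda>e. ep e = (b, a)) C)"
proof -
  have ne: "C \<noteq> []" and sC: "set C \<subseteq> R_arcs G S m w"
    and nxt: "\<And>i. i < length C \<Longrightarrow> snd (snd (C ! i)) = fst (C ! (Suc i mod length C))"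
    using dc unfolding directed_cycle_def by auto
  show ?thesis
  proof (cases "para a b")
    case True
    define n where "n = length C"
    have n0: "0 < n" using ne by (simp add: n_def)
    define f where "f i = K (fst (C ! i)) a b" for i
    have key: "(ep (C ! i) = (a, b) \<longleftrightarrow> f i \<and> \<not> f (Suc i mod n)) \<and> (ep (C ! i) = (b, a) \<longleftrightarrow> \<not> f i \<and> f (Suc i mod n))"
      if i: "i < n" for i
    proof -
      obtain x s t y where e: "C ! i = (x, (s, t), y)" by (cases "C ! i") auto
      have "C ! i \<in> set C" using i by (simp add: n_def)
      then have eR: "(x, (s, t), y) \<in> R_arcs G S m w" using sC e by auto
      have "y = fst (C ! (Suc i mod n))" using nxt[of i] i e by (simp add: n_def)
      then show ?thesis using flip[OF eR True] e by (simp add: f_def)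
    qed
    have "length (filter (\<lambda>e. ep e = (a, b)) C) = card {i. i < n \<and> f i \<and> \<not> f (Suc i mod n)}"
      unfolding length_filter_conv_card n_def[symmetric] using key by (intro arg_cong[where f=card]) auto
    also have "\<dots> = card {i. i < n \<and> \<not> f i \<and> f (Suc i mod n)}" by (rule cyclic[OF n0])
    also have "\<dots> = length (filter (\<lambda>e. ep e = (b, a)) C)"
      unfolding length_filter_conv_card n_def[symmetric] using key by (intro arg_cong[where f=card]) auto
    finally show ?thesis .
  next
    case False
    have pe: "para (fst (ep e)) (snd (ep e))" if "e \<in> set C" for e
    proof -
      obtain x s t y where e: "e = (x, (s, t), y)" by (cases e) auto
      then show ?thesis using arc_para[of x s t y] sC that by auto
    qed
    have "filter (\<lambda>e. ep e = (a, b)) C = []"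
      using pe False by (auto simp: filter_empty_conv) (metis fst_conv snd_conv)
    moreover have "filter (\<lambda>e. ep e = (b, a)) C = []"
      using pe False para_swap by (auto simp: filter_empty_conv) (metis fst_conv snd_conv)
    ultimately show ?thesis by simp
  qed
qed

lemma pc_def': "pair_conj G P Q \<longleftrightarrow> (\<exists>q\<in>carrier G. cj q (fst P) = fst Q \<and> cj q (snd P) = snd Q)"
  unfolding pair_conj_def cj_def by simp

lemma pc_sym: assumes "fst P \<in> carrier G" "snd P \<in> carrier G" "pair_conj G P Q" shows "pair_conj G Q P"
proof -
  obtain q where q: "q \<in> carrier G" "cj q (fst P) = fst Q" "cj q (snd P) = snd Q" using assms(3) unfolding pc_def' by auto
  have "cj (inv q) (fst Q) = cj (inv q) (cj q (fst P))" using q(2) by simp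
  also have "\<dots> = fst P" using q(1) assms(1) by (simp add: cj_cj)
  finally have 1: "cj (inv q) (fst Q) = fst P" .
  have "cj (inv q) (snd Q) = cj (inv q) (cj q (snd P))" using q(3) by simp
  also have "\<dots> = snd P" using q(1) assms(2) by (simp add: cj_cj)
  finally have "cj (inv q) (fst Q) = fst P" "cj (inv q) (snd Q) = snd P" using 1 by simp_all
  then show ?thesis unfolding pc_def' using q by (intro bexI[of _ "inv q"]) auto
qed

lemma pc_trans: assumes "fst P \<in> carrier G" "snd P \<in> carrier G" "pair_conj G P Q" "pair_conj G Q R"
  shows "pair_conj G P R"
proof -
  obtain q where q: "q \<in> carrier G" "cj q (fst P) = fst Q" "cj q (snd P) = snd Q" using assms(3) unfolding pc_def' by auto
  obtain r where r: "r \<in> carrier G" "cj r (fst Q) = fst R" "cj r (snd Q) = snd R" using assms(4) unfolding pc_def' by auto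
  have "cj (r \<otimes> q) (fst P) = cj r (cj q (fst P))" using q(1) r(1) assms(1) by (simp add: cj_cj)
  then have 1: "cj (r \<otimes> q) (fst P) = fst R" using q r by simp
  have "cj (r \<otimes> q) (snd P) = cj r (cj q (snd P))" using q(1) r(1) assms(2) by (simp add: cj_cj)
  then have "cj (r \<otimes> q) (fst P) = fst R" "cj (r \<otimes> q) (snd P) = snd R" using q r 1 by simp_all
  then show ?thesis unfolding pc_def' using q r by (intro bexI[of _ "r \<otimes> q"]) auto
qed

lemma pc_refl: assumes "fst P \<in> carrier G" "snd P \<in> carrier G" shows "pair_conj G P P"
  unfolding pc_def' using assms by (intro bexI[of _ \<one>]) auto

lemma bp_carr: "P \<in> braid_pairs S m \<Longrightarrow> fst P \<in> carrier G \<and> snd P \<in> carrier G"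
  unfolding braid_pairs_def using S_carr by auto

lemma class_eq: assumes "P \<in> braid_pairs S m" "Q \<in> braid_pairs S m"
  shows "pair_class G S m P = pair_class G S m Q \<longleftrightarrow> pair_conj G P Q"
proof
  assume h: "pair_class G S m P = pair_class G S m Q"
  have "Q \<in> pair_class G S m Q" unfolding pair_class_def using assms(2) pc_refl bp_carr[OF assms(2)] by auto
  then show "pair_conj G P Q" using h unfolding pair_class_def by auto
next
  assume h: "pair_conj G P Q"
  have hq: "pair_conj G Q P" using pc_sym bp_carr[OF assms(1)] h by auto
  show "pair_class G S m P = pair_class G S m Q"
    unfolding pair_class_def using pc_trans bp_carr[OF assms(1)] bp_carr[OF assms(2)] h hq by blast
qed

lemma col_iff: assumes e: "e \<in> R_arcs G S m w" and st: "(s, t) \<in> braid_pairs S m"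
  shows "arc_colour G S m e = pair_class G S m (s, t) \<longleftrightarrow> pair_conj G (s, t) (ep e)"
proof -
  obtain x s' t' y where ee: "e = (x, (s', t'), y)" by (cases e) auto
  have eR: "(x, (s', t'), y) \<in> R_arcs G S m w" using e ee by simp
  have bp: "(s', t') \<in> braid_pairs S m" using eR unfolding R_arcs_def by auto
  obtain k u v where d: "m s' t' = enat k" "x = u @ alt_word s' t' k @ v" "ep (x, (s', t'), y) = (cj (ev u) s', cj (ev u) t')"
    using arc_dec[OF eR] by blast
  have "x \<in> lists S" using arc_dec(5)[OF eR] red_lists by blast
  then have qc: "ev u \<in> carrier G" using d by simp
  have c1: "pair_conj G (s', t') (ep e)" unfolding pc_def' using ee d(3) qc by auto
  have c2: "pair_conj G (ep e) (s', t')" using pc_sym[OF _ _ c1] bp_carr[OF bp] by simp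
  have cst: "fst (s, t) \<in> carrier G" "snd (s, t) \<in> carrier G" using bp_carr[OF st] by auto
  have "arc_colour G S m e = pair_class G S m (s, t) \<longleftrightarrow> pair_conj G (s', t') (s, t)"
    unfolding arc_colour_def using ee class_eq[OF bp st] by simp
  also have "\<dots> \<longleftrightarrow> pair_conj G (s, t) (s', t')" using pc_sym cst bp_carr[OF bp] by blast
  also have "\<dots> \<longleftrightarrow> pair_conj G (s, t) (ep e)" using pc_trans[OF cst] c1 c2 by blast
  finally show ?thesis .
qed

lemma pc_swap: "pair_conj G (t, s) p \<longleftrightarrow> pair_conj G (s, t) (prod.swap p)"
  unfolding pc_def' by (cases p) auto

end


context cox begin

theorem main:
  assumes dc: "directed_cycle (R_arcs G S m w) C" and st: "(s, t) \<in> braid_pairs S m"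
  shows "length (filter (\<lambda>e. arc_colour G S m e = pair_class G S m (s, t)) C)
           = length (filter (\<lambda>e. arc_colour G S m e = pair_class G S m (t, s)) C)
         \<and> even (length (filter (\<lambda>e. arc_colour G S m e \<in>
           {pair_class G S m (s, t), pair_class G S m (t, s)}) C))"
proof -
  have sC: "set C \<subseteq> R_arcs G S m w" using dc unfolding directed_cycle_def by auto
  have ts: "(t, s) \<in> braid_pairs S m" using st m_sym unfolding braid_pairs_def by auto
  define Q where "Q p = pair_conj G (s, t) p" for p
  define N where "N p = length (filter (\<lambda>e. ep e = p) C)" for p
  define U where "U = ep ` set C \<union> prod.swap ` ep ` set C"
  have fU: "finite U" by (simp add: U_def)
  have epU: "ep ` set C \<subseteq> U" by (auto simp: U_def)
  have Usw: "\<forall>p\<in>U. prod.swap p \<in> U" by (auto simp: U_def image_iff)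
  have Nsym: "N (prod.swap p) = N p" for p using count_sym[OF dc, of "fst p" "snd p"] by (cases p) (simp add: N_def)
  have N0: "N (a, a) = 0" for a
  proof -
    have "ep e \<noteq> (a, a)" if "e \<in> set C" for e
    proof -
      obtain x s' t' y where e: "e = (x, (s', t'), y)" by (cases e) auto
      then have "para (fst (ep e)) (snd (ep e))" using arc_para[of x s' t' y] sC that by auto
      then show ?thesis using para_props(1) by (cases "ep e") auto
    qed
    then show ?thesis unfolding N_def by (simp add: filter_empty_conv)
  qed
  have A: "length (filter (\<lambda>e. arc_colour G S m e = pair_class G S m (s, t)) C) = (\<Sum>p\<in>{p\<in>U. Q p}. N p)"
  proof -
    have "filter (\<lambda>e. arc_colour G S m e = pair_class G S m (s, t)) C = filter (\<lambda>e. Q (ep e)) C"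
    proof (rule filter_cong[OF HOL.refl])
      fix e assume "e \<in> set C"
      then have eR: "e \<in> R_arcs G S m w" using sC by auto
      show "(arc_colour G S m e = pair_class G S m (s, t)) = Q (ep e)" using col_iff[OF eR st] by (simp add: Q_def)
    qed
    then show ?thesis using filter_sum[OF fU epU, of Q] by (simp add: N_def)
  qed
  have B: "length (filter (\<lambda>e. arc_colour G S m e = pair_class G S m (t, s)) C) = (\<Sum>p\<in>{p\<in>U. Q (prod.swap p)}. N p)"
  proof -
    have "filter (\<lambda>e. arc_colour G S m e = pair_class G S m (t, s)) C = filter (\<lambda>e. Q (prod.swap (ep e))) C"
    proof (rule filter_cong[OF HOL.refl])
      fix e assume "e \<in> set C"
      then have eR: "e \<in> R_arcs G S m w" using sC by auto
      show "(arc_colour G S m e = pair_class G S m (t, s)) = Q (prod.swap (ep e))"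
        using col_iff[OF eR ts] pc_swap by (simp add: Q_def)
    qed
    then show ?thesis using filter_sum[OF fU epU, of "\<lambda>p. Q (prod.swap p)"] by (simp add: N_def)
  qed
  have sw: "{p\<in>U. Q (prod.swap p)} = prod.swap ` {p\<in>U. Q p}"
  proof
    show "{p\<in>U. Q (prod.swap p)} \<subseteq> prod.swap ` {p\<in>U. Q p}"
    proof
      fix p assume "p \<in> {p\<in>U. Q (prod.swap p)}"
      then have "prod.swap p \<in> {p\<in>U. Q p}" using Usw by auto
      then show "p \<in> prod.swap ` {p\<in>U. Q p}" by (rule image_eqI[rotated]) simp
    qed
  next
    show "prod.swap ` {p\<in>U. Q p} \<subseteq> {p\<in>U. Q (prod.swap p)}" using Usw by auto
  qed
  have "(\<Sum>p\<in>{p\<in>U. Q (prod.swap p)}. N p) = (\<Sum>p\<in>{p\<in>U. Q p}. N (prod.swap p))"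
    unfolding sw by (subst sum.reindex) (auto simp: inj_on_def)
  also have "\<dots> = (\<Sum>p\<in>{p\<in>U. Q p}. N p)" using Nsym by simp
  finally have AB: "length (filter (\<lambda>e. arc_colour G S m e = pair_class G S m (s, t)) C)
           = length (filter (\<lambda>e. arc_colour G S m e = pair_class G S m (t, s)) C)" using A B by simp
  have Ev: "length (filter (\<lambda>e. arc_colour G S m e \<in> {pair_class G S m (s, t), pair_class G S m (t, s)}) C)
      = (\<Sum>p\<in>{p\<in>U. Q p \<or> Q (prod.swap p)}. N p)"
  proof -
    have "filter (\<lambda>e. arc_colour G S m e \<in> {pair_class G S m (s, t), pair_class G S m (t, s)}) C
        = filter (\<lambda>e. Q (ep e) \<or> Q (prod.swap (ep e))) C"
    proof (rule filter_cong[OF HOL.refl])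
      fix e assume "e \<in> set C"
      then have eR: "e \<in> R_arcs G S m w" using sC by auto
      show "(arc_colour G S m e \<in> {pair_class G S m (s, t), pair_class G S m (t, s)}) = (Q (ep e) \<or> Q (prod.swap (ep e)))"
        using col_iff[OF eR st] col_iff[OF eR ts] pc_swap by (simp add: Q_def)
    qed
    then show ?thesis using filter_sum[OF fU epU, of "\<lambda>p. Q p \<or> Q (prod.swap p)"] by (simp add: N_def)
  qed
  have "even (\<Sum>p\<in>{p\<in>U. Q p \<or> Q (prod.swap p)}. N p)"
  proof (rule even_sym_sum)
    show "finite {p\<in>U. Q p \<or> Q (prod.swap p)}" using fU by simp
    show "\<forall>p\<in>{p\<in>U. Q p \<or> Q (prod.swap p)}. prod.swap p \<in> {p\<in>U. Q p \<or> Q (prod.swap p)}"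
      using Usw by auto
  qed (use Nsym N0 in auto)
  then show ?thesis using AB Ev by simp
qed

end

theorem theorem2p3:
  fixes G :: "('a, 'b) monoid_scheme" and S :: "'a set" and m :: "'a \<Rightarrow> 'a \<Rightarrow> enat"
    and w :: 'a and C :: "('a list \<times> ('a \<times> 'a) \<times> 'a list) list" and s t :: 'a
  assumes "coxeter_system G S m"
    and "w \<in> carrier G"
    and "directed_cycle (R_arcs G S m w) C"
    and "(s, t) \<in> braid_pairs S m"
  shows "length (filter (\<lambda>e. arc_colour G S m e = pair_class G S m (s, t)) C)
           = length (filter (\<lambda>e. arc_colour G S m e = pair_class G S m (t, s)) C)
         \<and> even (length (filter (\<lambda>e. arc_colour G S m e \<in>
           {pair_class G S m (s, t), pair_class G S m (t, s)}) C))"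
proof -
  interpret cox G S m by (rule cox.intro) (rule assms(1))
  show ?thesis by (rule main[OF assms(3,4)])
qed


end
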